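(* Let $A$ be a finite-dimensional basic connected hereditary algebra over an algebraically closed field and $A'$ its right repetitive algebra. Let $L$ be an indecomposable $A'$-module and $0\to L\xrightarrow{f}I\xrightarrow{g}N\to0$ a short exact sequence of $A'$-modules with $f$ an injective envelope, $I$ projective-injective and $N\ne0$. Then (1) $g:I\to N$ is a projective cover in $\mathrm{mod}\,A'$, and (2) $N$ is indecomposable.
   Context: Modules are finitely generated right modules; $DA=\mathrm{Hom}_k(A,k)$. The right repetitive algebra $A'$ is the algebra of $\mathbb{N}\times\mathbb{N}$ lower triangular matrices with finitely many nonzero entries, entry $(i,i)$ in $A$ ($i\ge0$), entry $(i,i-1)$ in $DA$ ($i\ge1$), others zero, multiplication via the bimodule actions of $A$ on $DA$ and the zero map $DA\otimes_A DA\to0$. *)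

theory Defs
  imports "HOL-Computational_Algebra.Polynomial"
begin

definition alg_closed_field :: "'k::field itself \<Rightarrow> bool" where
  "alg_closed_field _ \<longleftrightarrow> (\<forall>p::'k poly. degree p > 0 \<longrightarrow> (\<exists>x. poly p x = 0))"

definition vsum :: "('v \<Rightarrow> 'v \<Rightarrow> 'v) \<Rightarrow> 'v \<Rightarrow> 'v list \<Rightarrow> 'v" where
  "vsum add z xs = foldr add xs z"

definition kvs :: "'v set \<Rightarrow> ('v \<Rightarrow> 'v \<Rightarrow> 'v) \<Rightarrow> 'v \<Rightarrow> ('k::field \<Rightarrow> 'v \<Rightarrow> 'v) \<Rightarrow> bool" where
  "kvs V add z sc \<longleftrightarrow> z \<in> V \<and> (\<forall>x\<in>V. \<forall>y\<in>V. add x y \<in> V) \<and> (\<forall>c. \<forall>x\<in>V. sc c x \<in> V) \<and>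
    (\<forall>x\<in>V. \<forall>y\<in>V. \<forall>w\<in>V. add (add x y) w = add x (add y w)) \<and>
    (\<forall>x\<in>V. \<forall>y\<in>V. add x y = add y x) \<and> (\<forall>x\<in>V. add z x = x) \<and>
    (\<forall>x\<in>V. add x (sc (-1) x) = z) \<and>
    (\<forall>c d. \<forall>x\<in>V. sc c (sc d x) = sc (c * d) x) \<and> (\<forall>x\<in>V. sc 1 x = x) \<and>
    (\<forall>c. \<forall>x\<in>V. \<forall>y\<in>V. sc c (add x y) = add (sc c x) (sc c y)) \<and>
    (\<forall>c d. \<forall>x\<in>V. sc (c + d) x = add (sc c x) (sc d x))"

record ('k, 'a) kalg =
  acar :: "'a set"
  aadd :: "'a \<Rightarrow> 'a \<Rightarrow> 'a"
  amul :: "'a \<Rightarrow> 'a \<Rightarrow> 'a"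
  azero :: "'a"
  asmult :: "'k \<Rightarrow> 'a \<Rightarrow> 'a"

record ('k, 'a) ualg = "('k, 'a) kalg" +
  aone :: "'a"

definition is_kalg :: "('k::field, 'a, 'b) kalg_scheme \<Rightarrow> bool" where
  "is_kalg A \<longleftrightarrow> kvs (acar A) (aadd A) (azero A) (asmult A) \<and>
    (\<forall>x\<in>acar A. \<forall>y\<in>acar A. amul A x y \<in> acar A) \<and>
    (\<forall>x\<in>acar A. \<forall>y\<in>acar A. \<forall>z\<in>acar A. amul A (amul A x y) z = amul A x (amul A y z)) \<and>
    (\<forall>x\<in>acar A. \<forall>y\<in>acar A. \<forall>z\<in>acar A.
        amul A x (aadd A y z) = aadd A (amul A x y) (amul A x z) \<and>
        amul A (aadd A x y) z = aadd A (amul A x z) (amul A y z)) \<and>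
    (\<forall>c. \<forall>x\<in>acar A. \<forall>y\<in>acar A.
        amul A (asmult A c x) y = asmult A c (amul A x y) \<and>
        amul A x (asmult A c y) = asmult A c (amul A x y))"

definition is_ualg :: "('k::field, 'a, 'b) ualg_scheme \<Rightarrow> bool" where
  "is_ualg A \<longleftrightarrow> is_kalg A \<and> aone A \<in> acar A \<and>
    (\<forall>x\<in>acar A. amul A (aone A) x = x \<and> amul A x (aone A) = x)"

definition fd_alg :: "('k::field, 'a, 'b) ualg_scheme \<Rightarrow> bool" where
  "fd_alg A \<longleftrightarrow> is_ualg A \<and> (\<exists>bs. set bs \<subseteq> acar A \<and>
     (\<forall>x\<in>acar A. \<exists>cs::'k list. length cs = length bs \<and>
        x = vsum (aadd A) (azero A) (map (\<lambda>(c, b). asmult A c b) (zip cs bs))))"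

record ('k, 'r, 'm) rmod =
  mcar :: "'m set"
  madd :: "'m \<Rightarrow> 'm \<Rightarrow> 'm"
  mzero :: "'m"
  msmult :: "'k \<Rightarrow> 'm \<Rightarrow> 'm"
  mact :: "'m \<Rightarrow> 'r \<Rightarrow> 'm"

definition is_rmod :: "('k::field, 'r, 'b) kalg_scheme \<Rightarrow> ('k, 'r, 'm) rmod \<Rightarrow> bool" where
  "is_rmod R M \<longleftrightarrow> kvs (mcar M) (madd M) (mzero M) (msmult M) \<and>
    (\<forall>m\<in>mcar M. \<forall>r\<in>acar R. mact M m r \<in> mcar M) \<and>
    (\<forall>m\<in>mcar M. \<forall>r\<in>acar R. \<forall>s\<in>acar R.
        mact M m (aadd R r s) = madd M (mact M m r) (mact M m s) \<and>
        mact M (mact M m r) s = mact M m (amul R r s)) \<and>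
    (\<forall>m\<in>mcar M. \<forall>n\<in>mcar M. \<forall>r\<in>acar R. mact M (madd M m n) r = madd M (mact M m r) (mact M n r)) \<and>
    (\<forall>c. \<forall>m\<in>mcar M. \<forall>r\<in>acar R.
        mact M (msmult M c m) r = msmult M c (mact M m r) \<and>
        mact M m (asmult R c r) = msmult M c (mact M m r))"

text \<open>Finitely generated right module (every element is R-combination
  of finitely many generators; this also gives unitarity M = MR).\<close>
definition fg_rmod :: "('k::field, 'r, 'b) kalg_scheme \<Rightarrow> ('k, 'r, 'm) rmod \<Rightarrow> bool" where
  "fg_rmod R M \<longleftrightarrow> is_rmod R M \<and> (\<exists>gs. set gs \<subseteq> mcar M \<and>
     (\<forall>m\<in>mcar M. \<exists>rs. length rs = length gs \<and> set rs \<subseteq> acar R \<and>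
        m = vsum (madd M) (mzero M) (map (\<lambda>(g, r). mact M g r) (zip gs rs))))"

definition hom :: "('k::field, 'r, 'b) kalg_scheme \<Rightarrow> ('k, 'r, 'm) rmod \<Rightarrow> ('k, 'r, 'n) rmod
    \<Rightarrow> ('m \<Rightarrow> 'n) \<Rightarrow> bool" where
  "hom R M N f \<longleftrightarrow> f ` mcar M \<subseteq> mcar N \<and>
    (\<forall>x\<in>mcar M. \<forall>y\<in>mcar M. f (madd M x y) = madd N (f x) (f y)) \<and>
    (\<forall>c. \<forall>x\<in>mcar M. f (msmult M c x) = msmult N c (f x)) \<and>
    (\<forall>x\<in>mcar M. \<forall>r\<in>acar R. f (mact M x r) = mact N (f x) r)"

definition submod :: "('k::field, 'r, 'b) kalg_scheme \<Rightarrow> ('k, 'r, 'm) rmod \<Rightarrow> 'm set \<Rightarrow> bool" where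
  "submod R M U \<longleftrightarrow> U \<subseteq> mcar M \<and> mzero M \<in> U \<and>
    (\<forall>x\<in>U. \<forall>y\<in>U. madd M x y \<in> U) \<and> (\<forall>c. \<forall>x\<in>U. msmult M c x \<in> U) \<and>
    (\<forall>x\<in>U. \<forall>r\<in>acar R. mact M x r \<in> U)"

definition msum_set :: "('k, 'r, 'm) rmod \<Rightarrow> 'm set \<Rightarrow> 'm set \<Rightarrow> 'm set" where
  "msum_set M U V = {madd M u v | u v. u \<in> U \<and> v \<in> V}"

definition indecomposable :: "('k::field, 'r, 'b) kalg_scheme \<Rightarrow> ('k, 'r, 'm) rmod \<Rightarrow> bool" where
  "indecomposable R M \<longleftrightarrow> mcar M \<noteq> {mzero M} \<and>
    (\<forall>U V. submod R M U \<and> submod R M V \<and> U \<inter> V = {mzero M} \<and> msum_set M U V = mcar M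
        \<longrightarrow> U = {mzero M} \<or> V = {mzero M})"

text \<open>All such modules occurring here are finite-dimensional
  over k, hence isomorphic to modules with carrier inside the type nat => 'k;
  the test modules range over these.\<close>
definition projective_in :: "('k::field, 'r, 'b) kalg_scheme \<Rightarrow> ('k, 'r, 'm) rmod \<Rightarrow> bool" where
  "projective_in R M \<longleftrightarrow> fg_rmod R M \<and>
    (\<forall>(X :: ('k, 'r, nat \<Rightarrow> 'k) rmod) (Y :: ('k, 'r, nat \<Rightarrow> 'k) rmod) p h.
       fg_rmod R X \<and> fg_rmod R Y \<and> hom R X Y p \<and> p ` mcar X = mcar Y \<and> hom R M Y h
       \<longrightarrow> (\<exists>h'. hom R M X h' \<and> (\<forall>m\<in>mcar M. p (h' m) = h m)))"

definition injective_in :: "('k::field, 'r, 'b) kalg_scheme \<Rightarrow> ('k, 'r, 'm) rmod \<Rightarrow> bool" where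
  "injective_in R M \<longleftrightarrow> fg_rmod R M \<and>
    (\<forall>(X :: ('k, 'r, nat \<Rightarrow> 'k) rmod) (Y :: ('k, 'r, nat \<Rightarrow> 'k) rmod) u h.
       fg_rmod R X \<and> fg_rmod R Y \<and> hom R X Y u \<and> inj_on u (mcar X) \<and> hom R X M h
       \<longrightarrow> (\<exists>h'. hom R Y M h' \<and> (\<forall>x\<in>mcar X. h' (u x) = h x)))"

definition essential_submod :: "('k::field, 'r, 'b) kalg_scheme \<Rightarrow> ('k, 'r, 'm) rmod \<Rightarrow> 'm set \<Rightarrow> bool" where
  "essential_submod R M U \<longleftrightarrow> submod R M U \<and>
    (\<forall>V. submod R M V \<and> U \<inter> V = {mzero M} \<longrightarrow> V = {mzero M})"

definition superfluous_submod :: "('k::field, 'r, 'b) kalg_scheme \<Rightarrow> ('k, 'r, 'm) rmod \<Rightarrow> 'm set \<Rightarrow> bool" where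
  "superfluous_submod R M K \<longleftrightarrow> submod R M K \<and>
    (\<forall>U. submod R M U \<and> msum_set M K U = mcar M \<longrightarrow> U = mcar M)"

definition injective_envelope :: "('k::field, 'r, 'b) kalg_scheme \<Rightarrow> ('k, 'r, 'l) rmod
    \<Rightarrow> ('k, 'r, 'e) rmod \<Rightarrow> ('l \<Rightarrow> 'e) \<Rightarrow> bool" where
  "injective_envelope R L E f \<longleftrightarrow> fg_rmod R L \<and> hom R L E f \<and> inj_on f (mcar L) \<and>
    injective_in R E \<and> essential_submod R E (f ` mcar L)"

definition projective_cover :: "('k::field, 'r, 'b) kalg_scheme \<Rightarrow> ('k, 'r, 'p) rmod
    \<Rightarrow> ('k, 'r, 'm) rmod \<Rightarrow> ('p \<Rightarrow> 'm) \<Rightarrow> bool" where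
  "projective_cover R P M g \<longleftrightarrow> fg_rmod R M \<and> hom R P M g \<and> g ` mcar P = mcar M \<and>
    projective_in R P \<and> superfluous_submod R P {x \<in> mcar P. g x = mzero M}"

definition ideal_mod :: "('k, 'a, 'b) kalg_scheme \<Rightarrow> 'a set \<Rightarrow> ('k, 'a, 'a) rmod" where
  "ideal_mod A J = \<lparr>mcar = J, madd = aadd A, mzero = azero A, msmult = asmult A, mact = amul A\<rparr>"

definition iso_mod :: "('k::field, 'r, 'b) kalg_scheme \<Rightarrow> ('k, 'r, 'm) rmod \<Rightarrow> ('k, 'r, 'n) rmod \<Rightarrow> bool" where
  "iso_mod R M N \<longleftrightarrow> (\<exists>f. hom R M N f \<and> bij_betw f (mcar M) (mcar N))"

definition idem :: "('k, 'a, 'b) kalg_scheme \<Rightarrow> 'a \<Rightarrow> bool" where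
  "idem A e \<longleftrightarrow> e \<in> acar A \<and> amul A e e = e"

definition orth :: "('k, 'a, 'b) kalg_scheme \<Rightarrow> 'a \<Rightarrow> 'a \<Rightarrow> bool" where
  "orth A e f \<longleftrightarrow> amul A e f = azero A \<and> amul A f e = azero A"

definition primitive_idem :: "('k, 'a, 'b) kalg_scheme \<Rightarrow> 'a \<Rightarrow> bool" where
  "primitive_idem A e \<longleftrightarrow> idem A e \<and> e \<noteq> azero A \<and>
    \<not> (\<exists>e1 e2. idem A e1 \<and> idem A e2 \<and> e1 \<noteq> azero A \<and> e2 \<noteq> azero A \<and> orth A e1 e2 \<and>
              e = aadd A e1 e2)"

definition complete_prim_orth :: "('k, 'a, 'b) ualg_scheme \<Rightarrow> 'a list \<Rightarrow> bool" where
  "complete_prim_orth A es \<longleftrightarrow> (\<forall>i<length es. primitive_idem A (es ! i)) \<and>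
    (\<forall>i<length es. \<forall>j<length es. i \<noteq> j \<longrightarrow> orth A (es ! i) (es ! j)) \<and>
    vsum (aadd A) (azero A) es = aone A"

definition basic_alg :: "('k::field, 'a, 'b) ualg_scheme \<Rightarrow> bool" where
  "basic_alg A \<longleftrightarrow> (\<exists>es. complete_prim_orth A es \<and>
    (\<forall>i<length es. \<forall>j<length es. i \<noteq> j \<longrightarrow>
       \<not> iso_mod A (ideal_mod A {amul A (es ! i) x | x. x \<in> acar A})
                   (ideal_mod A {amul A (es ! j) x | x. x \<in> acar A})))"

text \<open>Connected: A is nonzero and not a product of two nonzero algebras, i.e.
  0 and 1 are the only central idempotents.\<close>
definition connected_alg :: "('k, 'a, 'b) ualg_scheme \<Rightarrow> bool" where
  "connected_alg A \<longleftrightarrow> aone A \<noteq> azero A \<and>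
    (\<forall>c\<in>acar A. (\<forall>x\<in>acar A. amul A c x = amul A x c) \<and> amul A c c = c
        \<longrightarrow> c = azero A \<or> c = aone A)"

definition hereditary_alg :: "('k::field, 'a, 'b) ualg_scheme \<Rightarrow> bool" where
  "hereditary_alg A \<longleftrightarrow> (\<forall>J. submod A (ideal_mod A (acar A)) J \<longrightarrow> projective_in A (ideal_mod A J))"

definition dual :: "('k::field, 'a, 'b) kalg_scheme \<Rightarrow> ('a \<Rightarrow> 'k) set" where
  "dual A = {\<phi>. (\<forall>x\<in>acar A. \<forall>y\<in>acar A. \<phi> (aadd A x y) = \<phi> x + \<phi> y) \<and>
               (\<forall>c. \<forall>x\<in>acar A. \<phi> (asmult A c x) = c * \<phi> x) \<and>
               (\<forall>x. x \<notin> acar A \<longrightarrow> \<phi> x = 0)}"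

definition dlact :: "('k::field, 'a, 'b) kalg_scheme \<Rightarrow> 'a \<Rightarrow> ('a \<Rightarrow> 'k) \<Rightarrow> ('a \<Rightarrow> 'k)" where
  "dlact A a \<psi> = (\<lambda>x. if x \<in> acar A then \<psi> (amul A x a) else 0)"

definition dract :: "('k::field, 'a, 'b) kalg_scheme \<Rightarrow> ('a \<Rightarrow> 'k) \<Rightarrow> 'a \<Rightarrow> ('a \<Rightarrow> 'k)" where
  "dract A \<phi> b = (\<lambda>x. if x \<in> acar A then \<phi> (amul A b x) else 0)"

type_synonym ('k, 'a) rep = "(nat \<Rightarrow> 'a) \<times> (nat \<Rightarrow> 'a \<Rightarrow> 'k)"

text \<open>An element (a, phi) of A' is the N x N lower triangular matrix with
  entry a i at (i,i) and phi i at (i,i-1) (i >= 1; phi 0 = 0), finitely many nonzero.\<close>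
definition rep_alg :: "('k::field, 'a, 'b) kalg_scheme \<Rightarrow> ('k, ('k, 'a) rep) kalg" where
  "rep_alg A = \<lparr>
     acar = {(a, \<phi>). (\<forall>i. a i \<in> acar A) \<and> finite {i. a i \<noteq> azero A} \<and>
                     (\<forall>i. \<phi> i \<in> dual A) \<and> \<phi> 0 = (\<lambda>x. 0) \<and> finite {i. \<phi> i \<noteq> (\<lambda>x. 0)}},
     aadd = (\<lambda>(a, \<phi>) (b, \<psi>). (\<lambda>i. aadd A (a i) (b i), \<lambda>i x. \<phi> i x + \<psi> i x)),
     amul = (\<lambda>(a, \<phi>) (b, \<psi>). (\<lambda>i. amul A (a i) (b i),
               \<lambda>i. if i = 0 then (\<lambda>x. 0)
                   else (\<lambda>x. dlact A (a i) (\<psi> i) x + dract A (\<phi> i) (b (i - 1)) x))),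
     azero = (\<lambda>i. azero A, \<lambda>i x. 0),
     asmult = (\<lambda>c (a, \<phi>). (\<lambda>i. asmult A c (a i), \<lambda>i x. c * \<phi> i x)) \<rparr>"

end

theory Submission
  imports Defs "HOL-Library.Function_Algebras"
begin

primrec gsum :: "('v \<Rightarrow> 'v \<Rightarrow> 'v) \<Rightarrow> 'v \<Rightarrow> (nat \<Rightarrow> 'v) \<Rightarrow> nat \<Rightarrow> 'v" where
  "gsum add z f 0 = z"
| "gsum add z f (Suc n) = add (gsum add z f n) (f n)"

locale kv =
  fixes V :: "'v set" and add :: "'v \<Rightarrow> 'v \<Rightarrow> 'v" and z :: 'v and sc :: "'k::field \<Rightarrow> 'v \<Rightarrow> 'v"
  assumes kv: "kvs V add z sc"
begin

lemma kvu: "z \<in> V \<and> (\<forall>x\<in>V. \<forall>y\<in>V. add x y \<in> V) \<and> (\<forall>c. \<forall>x\<in>V. sc c x \<in> V) \<and>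
    (\<forall>x\<in>V. \<forall>y\<in>V. \<forall>w\<in>V. add (add x y) w = add x (add y w)) \<and>
    (\<forall>x\<in>V. \<forall>y\<in>V. add x y = add y x) \<and> (\<forall>x\<in>V. add z x = x) \<and>
    (\<forall>x\<in>V. add x (sc (-1) x) = z) \<and>
    (\<forall>c d. \<forall>x\<in>V. sc c (sc d x) = sc (c * d) x) \<and> (\<forall>x\<in>V. sc 1 x = x) \<and>
    (\<forall>c. \<forall>x\<in>V. \<forall>y\<in>V. sc c (add x y) = add (sc c x) (sc c y)) \<and>
    (\<forall>c d. \<forall>x\<in>V. sc (c + d) x = add (sc c x) (sc d x))"
  using kv unfolding kvs_def .

lemma z_in[simp]: "z \<in> V" using kvu by auto
lemma add_in[simp]: "x \<in> V \<Longrightarrow> y \<in> V \<Longrightarrow> add x y \<in> V" using kvu by auto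
lemma sc_in[simp]: "x \<in> V \<Longrightarrow> sc c x \<in> V" using kvu by auto
lemma assoc: "x \<in> V \<Longrightarrow> y \<in> V \<Longrightarrow> w \<in> V \<Longrightarrow> add (add x y) w = add x (add y w)" using kvu by auto
lemma comm: "x \<in> V \<Longrightarrow> y \<in> V \<Longrightarrow> add x y = add y x" using kvu by auto
lemma lz[simp]: "x \<in> V \<Longrightarrow> add z x = x" using kvu by auto
lemma linv: "x \<in> V \<Longrightarrow> add x (sc (-1) x) = z" using kvu by auto
lemma sc_sc: "x \<in> V \<Longrightarrow> sc c (sc d x) = sc (c * d) x" using kvu by auto
lemma sc_one[simp]: "x \<in> V \<Longrightarrow> sc 1 x = x" using kvu by auto
lemma sc_addr: "x \<in> V \<Longrightarrow> y \<in> V \<Longrightarrow> sc c (add x y) = add (sc c x) (sc c y)" using kvu by auto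
lemma sc_addl: "x \<in> V \<Longrightarrow> sc (c + d) x = add (sc c x) (sc d x)" using kvu by auto

lemma rz[simp]: "x \<in> V \<Longrightarrow> add x z = x"
  using comm[of x z] by simp

lemma cancel: "x \<in> V \<Longrightarrow> y \<in> V \<Longrightarrow> y' \<in> V \<Longrightarrow> add x y = add x y' \<Longrightarrow> y = y'"
proof -
  assume a: "x \<in> V" "y \<in> V" "y' \<in> V" "add x y = add x y'"
  have "y = add (add (sc (-1) x) x) y" using a linv[of x] comm[of x "sc (-1) x"] by simp
  also have "\<dots> = add (sc (-1) x) (add x y)" using a assoc by simp
  also have "\<dots> = add (add (sc (-1) x) x) y'" using a assoc by simp
  also have "\<dots> = y'" using a linv[of x] comm[of x "sc (-1) x"] by simp
  finally show ?thesis .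
qed

lemma sc_zero[simp]: "x \<in> V \<Longrightarrow> sc 0 x = z"
proof -
  assume x: "x \<in> V"
  have "add (sc 0 x) (sc 0 x) = add (sc 0 x) z" using sc_addl[OF x, of 0 0] x by simp
  then show ?thesis using cancel[of "sc 0 x" "sc 0 x" z] x by simp
qed

lemma sc_z[simp]: "sc c z = z"
proof -
  have "add (sc c z) (sc c z) = add (sc c z) z" using sc_addr[of z z c] by simp
  then show ?thesis using cancel[of "sc c z" "sc c z" z] by simp
qed

definition sub :: "'v \<Rightarrow> 'v \<Rightarrow> 'v" where "sub x y = add x (sc (-1) y)"

lemma sub_in[simp]: "x \<in> V \<Longrightarrow> y \<in> V \<Longrightarrow> sub x y \<in> V" unfolding sub_def by simp

lemma sub_self[simp]: "x \<in> V \<Longrightarrow> sub x x = z" unfolding sub_def using linv by simp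

lemma sub_add: "x \<in> V \<Longrightarrow> y \<in> V \<Longrightarrow> add (sub x y) y = x"
  unfolding sub_def using assoc[of x "sc (-1) y" y] linv[of y] comm[of y "sc (-1) y"] by simp

lemma add_sub: "x \<in> V \<Longrightarrow> y \<in> V \<Longrightarrow> sub (add x y) y = x"
  unfolding sub_def using assoc[of x y "sc (-1) y"] linv[of y] by simp

lemma sub_eq_z: "x \<in> V \<Longrightarrow> y \<in> V \<Longrightarrow> sub x y = z \<Longrightarrow> x = y"
  using sub_add[of x y] by simp

lemma sub_z[simp]: "x \<in> V \<Longrightarrow> sub x z = x" unfolding sub_def by simp

lemma add_left_eq: "x \<in> V \<Longrightarrow> y \<in> V \<Longrightarrow> add x y = x \<Longrightarrow> y = z"
  using cancel[of x y z] by simp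

lemma gsum_in[simp]: "(\<And>i. i < n \<Longrightarrow> f i \<in> V) \<Longrightarrow> gsum add z f n \<in> V"
  by (induction n) auto

lemma gsum_cong: "(\<And>i. i < n \<Longrightarrow> f i = g i) \<Longrightarrow> gsum add z f n = gsum add z g n"
  by (induction n) auto

lemma add4: "a \<in> V \<Longrightarrow> b \<in> V \<Longrightarrow> c \<in> V \<Longrightarrow> d \<in> V \<Longrightarrow>
   add (add a b) (add c d) = add (add a c) (add b d)"
  by (metis assoc comm add_in)

lemma gsum_add: "(\<And>i. i < n \<Longrightarrow> f i \<in> V) \<Longrightarrow> (\<And>i. i < n \<Longrightarrow> g i \<in> V) \<Longrightarrow>
   gsum add z (\<lambda>i. add (f i) (g i)) n = add (gsum add z f n) (gsum add z g n)"
  by (induction n) (auto simp: add4)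

lemma gsum_sc: "(\<And>i. i < n \<Longrightarrow> f i \<in> V) \<Longrightarrow>
   gsum add z (\<lambda>i. sc c (f i)) n = sc c (gsum add z f n)"
  by (induction n) (auto simp: sc_addr)

lemma gsum_z: "gsum add z (\<lambda>i. z) n = z"
  by (induction n) auto

lemma gsum_Suc_front: "(\<And>i. i < Suc n \<Longrightarrow> f i \<in> V) \<Longrightarrow>
   gsum add z f (Suc n) = add (f 0) (gsum add z (\<lambda>i. f (Suc i)) n)"
proof (induction n)
  case 0 then show ?case by (simp add: comm)
next
  case (Suc n)
  have "gsum add z f (Suc (Suc n)) = add (gsum add z f (Suc n)) (f (Suc n))" by simp
  also have "\<dots> = add (add (f 0) (gsum add z (\<lambda>i. f (Suc i)) n)) (f (Suc n))" using Suc by simp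
  also have "\<dots> = add (f 0) (gsum add z (\<lambda>i. f (Suc i)) (Suc n))" using Suc.prems by (simp add: assoc)
  finally show ?case .
qed

lemma vsum_gsum: "set xs \<subseteq> V \<Longrightarrow> vsum add z xs = gsum add z (\<lambda>i. xs ! i) (length xs)"
proof (induction xs)
  case Nil then show ?case by (simp add: vsum_def)
next
  case (Cons x xs)
  have h: "\<And>i. i < Suc (length xs) \<Longrightarrow> (x # xs) ! i \<in> V"
    using Cons.prems by (auto simp: nth_Cons' subset_iff split: nat.splits)
  have "gsum add z (\<lambda>i. (x # xs) ! i) (Suc (length xs)) = add ((x # xs) ! 0) (gsum add z (\<lambda>i. (x # xs) ! Suc i) (length xs))"
    by (rule gsum_Suc_front[OF h])
  then have "gsum add z (\<lambda>i. (x # xs) ! i) (length (x # xs)) = add x (gsum add z (\<lambda>i. xs ! i) (length xs))"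
    by (simp del: gsum.simps(2))
  then show ?case using Cons by (simp add: vsum_def)
qed

end


locale rm =
  fixes R :: "('k::field, 'r, 'b) kalg_scheme" and M :: "('k, 'r, 'm) rmod"
  assumes rm: "is_rmod R M"
begin

sublocale kv "mcar M" "madd M" "mzero M" "msmult M"
  using rm unfolding is_rmod_def by (unfold_locales) auto

lemma act_in[simp]: "m \<in> mcar M \<Longrightarrow> r \<in> acar R \<Longrightarrow> mact M m r \<in> mcar M"
  using rm unfolding is_rmod_def by auto
lemma act_addr: "m \<in> mcar M \<Longrightarrow> r \<in> acar R \<Longrightarrow> s \<in> acar R \<Longrightarrow>
   mact M m (aadd R r s) = madd M (mact M m r) (mact M m s)"
  using rm unfolding is_rmod_def by auto
lemma act_mul: "m \<in> mcar M \<Longrightarrow> r \<in> acar R \<Longrightarrow> s \<in> acar R \<Longrightarrow>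
   mact M (mact M m r) s = mact M m (amul R r s)"
  using rm unfolding is_rmod_def by auto
lemma act_addl: "m \<in> mcar M \<Longrightarrow> n \<in> mcar M \<Longrightarrow> r \<in> acar R \<Longrightarrow>
   mact M (madd M m n) r = madd M (mact M m r) (mact M n r)"
  using rm unfolding is_rmod_def by auto
lemma act_scl: "m \<in> mcar M \<Longrightarrow> r \<in> acar R \<Longrightarrow> mact M (msmult M c m) r = msmult M c (mact M m r)"
  using rm unfolding is_rmod_def by auto
lemma act_scr: "m \<in> mcar M \<Longrightarrow> r \<in> acar R \<Longrightarrow> mact M m (asmult R c r) = msmult M c (mact M m r)"
  using rm unfolding is_rmod_def by auto

lemma act_z[simp]: "r \<in> acar R \<Longrightarrow> mact M (mzero M) r = mzero M"
proof -
  assume r: "r \<in> acar R"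
  have "madd M (mact M (mzero M) r) (mact M (mzero M) r) = mact M (mzero M) r"
    using act_addl[of "mzero M" "mzero M" r] r by simp
  then show ?thesis using add_left_eq[of "mact M (mzero M) r" "mact M (mzero M) r"] r by simp
qed

lemma act_sub: "m \<in> mcar M \<Longrightarrow> n \<in> mcar M \<Longrightarrow> r \<in> acar R \<Longrightarrow>
   mact M (sub m n) r = sub (mact M m r) (mact M n r)"
  unfolding sub_def by (simp add: act_addl act_scl)

lemma act_gsum: "(\<And>i. i < n \<Longrightarrow> f i \<in> mcar M) \<Longrightarrow> r \<in> acar R \<Longrightarrow>
   mact M (gsum (madd M) (mzero M) f n) r = gsum (madd M) (mzero M) (\<lambda>i. mact M (f i) r) n"
  by (induction n) (auto simp: act_addl)

end

lemma submod_rmod: "is_rmod R M \<Longrightarrow> submod R M U \<Longrightarrow> is_rmod R (M\<lparr>mcar := U\<rparr>)"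
  unfolding is_rmod_def submod_def kvs_def by (auto simp: subset_iff)

locale rm2 = M: rm R M + N: rm R N
  for R :: "('k::field, 'r, 'b) kalg_scheme" and M :: "('k, 'r, 'm) rmod" and N :: "('k, 'r, 'n) rmod"
begin

context fixes f assumes f: "hom R M N f"
begin
lemma hom_in[simp]: "x \<in> mcar M \<Longrightarrow> f x \<in> mcar N" using f unfolding hom_def by auto
lemma hom_add: "x \<in> mcar M \<Longrightarrow> y \<in> mcar M \<Longrightarrow> f (madd M x y) = madd N (f x) (f y)"
  using f unfolding hom_def by auto
lemma hom_sc: "x \<in> mcar M \<Longrightarrow> f (msmult M c x) = msmult N c (f x)"
  using f unfolding hom_def by auto
lemma hom_act: "x \<in> mcar M \<Longrightarrow> r \<in> acar R \<Longrightarrow> f (mact M x r) = mact N (f x) r"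
  using f unfolding hom_def by auto
lemma hom_z[simp]: "f (mzero M) = mzero N"
  using hom_sc[of "mzero M" 0] by simp
lemma hom_sub: "x \<in> mcar M \<Longrightarrow> y \<in> mcar M \<Longrightarrow> f (M.sub x y) = N.sub (f x) (f y)"
  unfolding M.sub_def N.sub_def by (simp add: hom_add hom_sc)
lemma hom_gsum: "(\<And>i. i < n \<Longrightarrow> g i \<in> mcar M) \<Longrightarrow>
   f (gsum (madd M) (mzero M) g n) = gsum (madd N) (mzero N) (\<lambda>i. f (g i)) n"
  by (induction n) (auto simp: hom_add)
lemma ker_submod: "submod R M {x \<in> mcar M. f x = mzero N}"
  unfolding submod_def
proof (intro conjI ballI allI)
  fix x y assume "x \<in> {x \<in> mcar M. f x = mzero N}" "y \<in> {x \<in> mcar M. f x = mzero N}"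
  then show "madd M x y \<in> {x \<in> mcar M. f x = mzero N}" by (simp add: hom_add)
next
  fix c x assume "x \<in> {x \<in> mcar M. f x = mzero N}"
  then show "msmult M c x \<in> {x \<in> mcar M. f x = mzero N}" by (simp add: hom_sc)
next
  fix x r assume "x \<in> {x \<in> mcar M. f x = mzero N}" "r \<in> acar R"
  then show "mact M x r \<in> {x \<in> mcar M. f x = mzero N}" by (simp add: hom_act)
qed auto
lemma img_submod: "submod R N (f ` mcar M)"
  unfolding submod_def
proof (intro conjI ballI allI)
  show "mzero N \<in> f ` mcar M" using hom_z M.z_in by (metis image_eqI)
  fix x y assume "x \<in> f ` mcar M" "y \<in> f ` mcar M"
  then obtain a b where "a \<in> mcar M" "b \<in> mcar M" "x = f a" "y = f b" by auto
  then show "madd N x y \<in> f ` mcar M" by (metis hom_add M.add_in image_eqI)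
next
  fix c x assume "x \<in> f ` mcar M"
  then obtain a where "a \<in> mcar M" "x = f a" by auto
  then show "msmult N c x \<in> f ` mcar M" by (metis hom_sc M.sc_in image_eqI)
next
  fix x r assume "x \<in> f ` mcar M" "r \<in> acar R"
  then obtain a where "a \<in> mcar M" "x = f a" by auto
  then show "mact N x r \<in> f ` mcar M" using \<open>r \<in> acar R\<close> by (metis hom_act M.act_in image_eqI)
qed (auto simp: image_subset_iff)
lemma preimg_submod: "submod R N U \<Longrightarrow> submod R M {x \<in> mcar M. f x \<in> U}"
  unfolding submod_def by (auto simp: hom_add hom_sc hom_act)
lemma hom_inj_iff: "inj_on f (mcar M) \<longleftrightarrow> (\<forall>x\<in>mcar M. f x = mzero N \<longrightarrow> x = mzero M)"
proof
  assume "inj_on f (mcar M)" then show "\<forall>x\<in>mcar M. f x = mzero N \<longrightarrow> x = mzero M"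
    by (metis M.z_in hom_z inj_on_def)
next
  assume a: "\<forall>x\<in>mcar M. f x = mzero N \<longrightarrow> x = mzero M"
  show "inj_on f (mcar M)"
  proof (rule inj_onI)
    fix x y assume "x \<in> mcar M" "y \<in> mcar M" "f x = f y"
    then have "f (M.sub x y) = mzero N" by (simp add: hom_sub)
    then have "M.sub x y = mzero M" using a \<open>x \<in> mcar M\<close> \<open>y \<in> mcar M\<close> by simp
    then show "x = y" using M.sub_eq_z \<open>x \<in> mcar M\<close> \<open>y \<in> mcar M\<close> by blast
  qed
qed
end

lemma hom_sub_fun: "hom R M N f \<Longrightarrow> hom R M N g \<Longrightarrow> hom R M N (\<lambda>x. N.sub (f x) (g x))"
  unfolding hom_def N.sub_def
  apply (intro conjI ballI allI)
  subgoal by (auto simp: image_subset_iff)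
  subgoal by (clarsimp simp: image_subset_iff N.sc_addr N.sc_sc N.add4)
  subgoal by (clarsimp simp: image_subset_iff N.sc_addr N.sc_sc mult.commute)
  subgoal by (clarsimp simp: image_subset_iff N.act_addl N.act_scl)
  done

lemma hom_add_fun: "hom R M N f \<Longrightarrow> hom R M N g \<Longrightarrow> hom R M N (\<lambda>x. madd N (f x) (g x))"
  unfolding hom_def
  apply (intro conjI ballI allI)
  subgoal by (auto simp: image_subset_iff)
  subgoal by (clarsimp simp: image_subset_iff N.add4)
  subgoal by (clarsimp simp: image_subset_iff N.sc_addr)
  subgoal by (clarsimp simp: image_subset_iff N.act_addl)
  done

lemma hom_into_sub: "hom R M N f \<Longrightarrow> f ` mcar M \<subseteq> U \<Longrightarrow> hom R M (N\<lparr>mcar := U\<rparr>) f"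
  unfolding hom_def by auto

end

lemma hom_from_sub: "hom R M N f \<Longrightarrow> U \<subseteq> mcar M \<Longrightarrow> hom R (M\<lparr>mcar := U\<rparr>) N f"
  unfolding hom_def by (auto simp: subset_iff)

lemma hom_sub_target: "hom R M (N\<lparr>mcar := U\<rparr>) f \<Longrightarrow> U \<subseteq> mcar N \<Longrightarrow> hom R M N f"
  unfolding hom_def by auto

lemma hom_comp: "hom R M N f \<Longrightarrow> hom R N P g \<Longrightarrow> hom R M P (\<lambda>x. g (f x))"
  unfolding hom_def by (auto simp: image_subset_iff)

lemma hom_id: "hom R M M (\<lambda>x. x)"
  unfolding hom_def by auto

lemma hom_funpow: "hom R M M f \<Longrightarrow> hom R M M (f ^^ n)"
proof (induction n)
  case 0 then show ?case by (simp add: hom_id[unfolded id_def] id_def)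
next
  case (Suc n)
  have "hom R M M (\<lambda>x. f ((f ^^ n) x))" by (rule hom_comp[OF Suc.IH[OF Suc.prems] Suc.prems])
  then show ?case by (simp only: funpow.simps(2) comp_def)
qed

lemma hom_funpow_in: "hom R M M f \<Longrightarrow> x \<in> mcar M \<Longrightarrow> (f ^^ n) x \<in> mcar M"
  using hom_funpow[of R M f n] unfolding hom_def by auto


definition fsc :: "'k::field \<Rightarrow> (nat \<Rightarrow> 'k) \<Rightarrow> (nat \<Rightarrow> 'k)" where
  "fsc a c = (\<lambda>i. a * c i)"

lemma vs_fsc: "vector_space (fsc :: 'k::field \<Rightarrow> _)"
  by unfold_locales (auto simp: fsc_def plus_fun_def algebra_simps)
lemma sum_fun_apply: "(\<Sum>t\<in>A. f t) i = (\<Sum>t\<in>A. f t i)"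
  by (induction A rule: infinite_finite_induct) (auto simp: plus_fun_def zero_fun_def)

definition unitv :: "nat \<Rightarrow> nat \<Rightarrow> 'k::field" where
  "unitv t = (\<lambda>i. if i = t then 1 else 0)"

definition Vd :: "nat \<Rightarrow> (nat \<Rightarrow> 'k::field) set" where
  "Vd D = {c. \<forall>i\<ge>D. c i = 0}"


lemma Vd_span: "Vd D \<subseteq> module.span fsc (unitv ` {..<D} :: (nat \<Rightarrow> 'k::field) set)"
proof
  interpret fv: vector_space fsc by (rule vs_fsc)
  fix c :: "nat \<Rightarrow> 'k" assume c: "c \<in> Vd D"
  have "(\<Sum>t<D. fsc (c t) (unitv t)) \<in> fv.span (unitv ` {..<D})"
    by (intro fv.span_sum fv.span_scale fv.span_base) auto
  moreover have "(\<Sum>t<D. fsc (c t) (unitv t)) = c"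
  proof
    fix i
    have "(\<Sum>t<D. fsc (c t) (unitv t)) i = (\<Sum>t<D. c t * unitv t i)"
      by (simp add: sum_fun_apply fsc_def)
    also have "\<dots> = c i"
      using c by (cases "i < D") (auto simp: unitv_def Vd_def if_distrib[of "\<lambda>x. c _ * x"] sum.delta cong: if_cong)
    finally show "(\<Sum>t<D. fsc (c t) (unitv t)) i = c i" .
  qed
  ultimately show "c \<in> fv.span (unitv ` {..<D})" by simp
qed

lemma eq_by_dim:
  assumes "module.subspace fsc A" "module.subspace fsc B" "A \<subseteq> B"
    "finite W" "B \<subseteq> module.span fsc W"
    "vector_space.dim fsc B \<le> vector_space.dim fsc (A :: (nat \<Rightarrow> 'k::field) set)"
  shows "A = B"
proof (rule ccontr)
  interpret fv: vector_space fsc by (rule vs_fsc)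
  assume "A \<noteq> B"
  then obtain x where x: "x \<in> B" "x \<notin> A" using assms(3) by auto
  obtain BA where BA: "BA \<subseteq> A" "fv.independent BA" "A \<subseteq> fv.span BA" "card BA = fv.dim A"
    using fv.basis_exists by blast
  obtain BB where BB: "BB \<subseteq> B" "fv.independent BB" "B \<subseteq> fv.span BB" "card BB = fv.dim B"
    using fv.basis_exists by blast
  have finBB: "finite BB" using fv.independent_span_bound[OF assms(4) BB(2)] BB(1) assms(5) by auto
  have finBA: "finite BA" using fv.independent_span_bound[OF assms(4) BA(2)] BA(1) assms(3,5) by auto
  have "fv.span BA \<subseteq> A" using BA(1) assms(1) by (simp add: fv.span_minimal)
  then have xs: "x \<notin> fv.span BA" using x by auto
  then have xBA: "x \<notin> BA" using fv.span_base by blast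
  have ind: "fv.independent (insert x BA)" using BA(2) xs xBA by (simp add: fv.independent_insert)
  have "insert x BA \<subseteq> fv.span BB" using x BA(1) assms(3) BB(3) by auto
  then have "card (insert x BA) \<le> card BB" using fv.independent_span_bound[OF finBB ind] by auto
  then show False using BA(4) BB(4) assms(6) finBA xBA by simp
qed

lemma dim_mono_fin:
  assumes "A \<subseteq> B" "finite W" "B \<subseteq> module.span fsc W"
  shows "vector_space.dim fsc A \<le> vector_space.dim fsc (B :: (nat \<Rightarrow> 'k::field) set)"
proof -
  interpret fv: vector_space fsc by (rule vs_fsc)
  obtain BA where BA: "BA \<subseteq> A" "fv.independent BA" "A \<subseteq> fv.span BA" "card BA = fv.dim A"
    using fv.basis_exists by blast
  obtain BB where BB: "BB \<subseteq> B" "fv.independent BB" "B \<subseteq> fv.span BB" "card BB = fv.dim B"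
    using fv.basis_exists by blast
  have finBB: "finite BB" using fv.independent_span_bound[OF assms(2) BB(2)] BB(1) assms(3) by auto
  have "BA \<subseteq> fv.span BB" using BA(1) assms(1) BB(3) by auto
  then have "card BA \<le> card BB" using fv.independent_span_bound[OF finBB BA(2)] by auto
  then show ?thesis using BA(4) BB(4) by simp
qed

lemma sum_distinct_nth: "distinct xs \<Longrightarrow> sum f (set xs) = (\<Sum>i<length xs. f (xs ! i))"
proof -
  assume d: "distinct xs"
  have inj: "inj_on (nth xs) {..<length xs}" using d by (simp add: inj_on_def nth_eq_iff_index_eq)
  have "set xs = nth xs ` {..<length xs}" by (auto simp: in_set_conv_nth image_iff)
  then show ?thesis by (simp add: sum.reindex[OF inj])
qed

lemma nat_mono_stab:
  fixes a :: "nat \<Rightarrow> nat"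
  assumes "\<And>n. a n \<le> a (Suc n)" "\<And>n. a n \<le> B"
  shows "\<exists>N. \<forall>n\<ge>N. a n = a N"
proof -
  have fin: "finite (range a)" using assms(2) by (meson finite_atMost finite_subset image_subsetI atMost_iff)
  obtain N where N: "a N = Max (range a)" using Max_in[OF fin] by auto
  have mono: "m \<le> n \<Longrightarrow> a m \<le> a n" for m n using assms(1) by (simp add: lift_Suc_mono_le)
  show ?thesis
    by (rule exI[of _ N]) (metis N Max_ge fin rangeI le_antisym mono)
qed

lemma nat_anti_stab:
  fixes a :: "nat \<Rightarrow> nat"
  assumes "\<And>n. a (Suc n) \<le> a n"
  shows "\<exists>N. \<forall>n\<ge>N. a n = a N"
proof -
  have "\<exists>N. \<forall>n\<ge>N. a 0 - a n = a 0 - a N"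
  proof (rule nat_mono_stab)
    have "m \<le> n \<Longrightarrow> a n \<le> a m" for m n using assms by (simp add: lift_Suc_antimono_le)
    then show "a 0 - a n \<le> a 0 - a (Suc n)" "a 0 - a n \<le> a 0" for n using assms[of n] by (auto intro: diff_le_mono2)
  qed
  moreover have "m \<le> n \<Longrightarrow> a n \<le> a m" for m n using assms by (simp add: lift_Suc_antimono_le)
  ultimately show ?thesis by (metis diff_diff_cancel le0)
qed

context kv
begin

lemma nth_in[simp]: "set ws \<subseteq> V \<Longrightarrow> i < length ws \<Longrightarrow> ws ! i \<in> V"
  using nth_mem by blast

definition lcomb :: "'v list \<Rightarrow> (nat \<Rightarrow> 'k) \<Rightarrow> 'v" where
  "lcomb ws c = gsum add z (\<lambda>i. sc (c i) (ws ! i)) (length ws)"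

definition ksub :: "'v set \<Rightarrow> bool" where
  "ksub S \<longleftrightarrow> S \<subseteq> V \<and> z \<in> S \<and> (\<forall>x\<in>S. \<forall>y\<in>S. add x y \<in> S) \<and> (\<forall>c. \<forall>x\<in>S. sc c x \<in> S)"

definition fdl :: "'v list \<Rightarrow> bool" where
  "fdl ws \<longleftrightarrow> set ws \<subseteq> V \<and> (\<forall>x\<in>V. \<exists>c. x = lcomb ws c)"

lemma lcomb_in[simp]: "set ws \<subseteq> V \<Longrightarrow> lcomb ws c \<in> V"
  unfolding lcomb_def by (auto intro!: gsum_in)

lemma lcomb_add: "set ws \<subseteq> V \<Longrightarrow> lcomb ws (c + d) = add (lcomb ws c) (lcomb ws d)"
  unfolding lcomb_def by (subst gsum_add[symmetric]) (auto intro!: gsum_cong simp: sc_addl)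

lemma lcomb_sc: "set ws \<subseteq> V \<Longrightarrow> lcomb ws (fsc a c) = sc a (lcomb ws c)"
  unfolding lcomb_def fsc_def by (subst gsum_sc[symmetric]) (auto intro!: gsum_cong simp: sc_sc)

lemma lcomb_zero: "set ws \<subseteq> V \<Longrightarrow> lcomb ws 0 = z"
proof -
  assume "set ws \<subseteq> V"
  then have "gsum add z (\<lambda>i. sc (0 i) (ws ! i)) (length ws) = gsum add z (\<lambda>i. z) (length ws)"
    by (intro gsum_cong) auto
  then show ?thesis unfolding lcomb_def by (simp add: gsum_z)
qed

lemma lcomb_trunc: "lcomb ws (\<lambda>i. if i < length ws then c i else 0) = lcomb ws c"
  unfolding lcomb_def by (rule gsum_cong) auto

lemma lcomb_sum: "set ws \<subseteq> V \<Longrightarrow> lcomb ws (\<Sum>i<n. g i) = gsum add z (\<lambda>i. lcomb ws (g i)) n"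
  by (induction n) (auto simp: lcomb_add lcomb_zero)


definition Pre :: "'v list \<Rightarrow> 'v set \<Rightarrow> (nat \<Rightarrow> 'k) set" where
  "Pre ws S = {c \<in> Vd (length ws). lcomb ws c \<in> S}"

lemma Pre_subspace: "set ws \<subseteq> V \<Longrightarrow> ksub S \<Longrightarrow> module.subspace fsc (Pre ws S)"
proof -
  interpret fv: vector_space fsc by (rule vs_fsc)
  assume a: "set ws \<subseteq> V" "ksub S"
  show ?thesis unfolding fv.subspace_def Pre_def
  proof (intro conjI ballI allI)
    show "0 \<in> {c \<in> Vd (length ws). lcomb ws c \<in> S}" using a by (auto simp: lcomb_zero Vd_def ksub_def)
  next
    fix x y assume "x \<in> {c \<in> Vd (length ws). lcomb ws c \<in> S}" "y \<in> {c \<in> Vd (length ws). lcomb ws c \<in> S}"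
    then show "x + y \<in> {c \<in> Vd (length ws). lcomb ws c \<in> S}" using a by (auto simp: lcomb_add Vd_def ksub_def)
  next
    fix c x assume "x \<in> {c \<in> Vd (length ws). lcomb ws c \<in> S}"
    then show "fsc c x \<in> {c \<in> Vd (length ws). lcomb ws c \<in> S}" using a lcomb_sc[of ws c x] by (auto simp: Vd_def ksub_def fsc_def)
  qed
qed

lemma Pre_span: "Pre ws S \<subseteq> module.span fsc (unitv ` {..<length ws})"
  using Vd_span unfolding Pre_def by blast

lemma Pre_dim: "vector_space.dim fsc (Pre ws S) \<le> length ws"
proof -
  interpret fv: vector_space fsc by (rule vs_fsc)
  have "fv.dim (Pre ws S) \<le> card (unitv ` {..<length ws} :: (nat \<Rightarrow> 'k) set)"
    by (rule fv.dim_le_card[OF Pre_span]) auto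
  also have "\<dots> \<le> length ws" using card_image_le[of "{..<length ws}" unitv] by simp
  finally show ?thesis .
qed

lemma Pre_inj: assumes "fdl ws" "S \<subseteq> V" "T \<subseteq> V" "Pre ws S = Pre ws T" shows "S = T"
proof -
  have key: "x \<in> T'" if x: "x \<in> S'" and SV: "S' \<subseteq> V" and P: "Pre ws S' = Pre ws T'" for x S' T'
  proof -
    obtain c where c: "x = lcomb ws c" using assms(1) x SV unfolding fdl_def by blast
    define c' where "c' = (\<lambda>i. if i < length ws then c i else 0)"
    have l: "lcomb ws c' = x" using c lcomb_trunc[of ws c] unfolding c'_def by simp
    have "c' \<in> Vd (length ws)" unfolding c'_def Vd_def by simp
    then have "c' \<in> Pre ws S'" using l x unfolding Pre_def by simp
    then have "c' \<in> Pre ws T'" using P by simp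
    then show "x \<in> T'" using l unfolding Pre_def by simp
  qed
  have "S \<subseteq> T" using key[OF _ assms(2) assms(4)] by blast
  moreover have "T \<subseteq> S" using key[OF _ assms(3) assms(4)[symmetric]] by blast
  ultimately show ?thesis by (rule subset_antisym)
qed

lemma Pre_mono: "S \<subseteq> T \<Longrightarrow> Pre ws S \<subseteq> Pre ws T"
  unfolding Pre_def by auto

lemma chain_stab_mono:
  assumes ws: "fdl ws" and S: "\<And>n. ksub (S n)" and mono: "\<And>n. S n \<subseteq> S (Suc n)"
  shows "\<exists>N. \<forall>n\<ge>N. S n = S N"
proof -
  interpret fv: vector_space fsc by (rule vs_fsc)
  have wsV: "set ws \<subseteq> V" using ws unfolding fdl_def by auto
  have SV: "S n \<subseteq> V" for n using S[of n] unfolding ksub_def by auto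
  have a1: "fv.dim (Pre ws (S n)) \<le> fv.dim (Pre ws (S (Suc n)))" for n
    by (rule dim_mono_fin[OF Pre_mono[OF mono] _ Pre_span]) simp
  have a2: "fv.dim (Pre ws (S n)) \<le> length ws" for n by (rule Pre_dim)
  obtain N where N: "\<And>n. n \<ge> N \<Longrightarrow> fv.dim (Pre ws (S n)) = fv.dim (Pre ws (S N))"
    using nat_mono_stab[of "\<lambda>n. fv.dim (Pre ws (S n))", OF a1 a2] by blast
  have sub: "S N \<subseteq> S n" if "N \<le> n" for n
    using that
  proof (induction n rule: dec_induct)
    case base then show ?case by simp
  next
    case (step n) then show ?case using mono[of n] by blast
  qed
  have "S n = S N" if "N \<le> n" for n
  proof -
    have "Pre ws (S N) = Pre ws (S n)"
      by (rule eq_by_dim[OF Pre_subspace[OF wsV S] Pre_subspace[OF wsV S] Pre_mono[OF sub[OF that]] _ Pre_span])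
         (use N[OF that] in auto)
    then show ?thesis using Pre_inj[OF ws SV SV] by metis
  qed
  then show ?thesis by blast
qed

lemma chain_stab_anti:
  assumes ws: "fdl ws" and S: "\<And>n. ksub (S n)" and anti: "\<And>n. S (Suc n) \<subseteq> S n"
  shows "\<exists>N. \<forall>n\<ge>N. S n = S N"
proof -
  interpret fv: vector_space fsc by (rule vs_fsc)
  have wsV: "set ws \<subseteq> V" using ws unfolding fdl_def by auto
  have SV: "S n \<subseteq> V" for n using S[of n] unfolding ksub_def by auto
  have a1: "fv.dim (Pre ws (S (Suc n))) \<le> fv.dim (Pre ws (S n))" for n
    by (rule dim_mono_fin[OF Pre_mono[OF anti] _ Pre_span]) simp
  obtain N where N: "\<And>n. n \<ge> N \<Longrightarrow> fv.dim (Pre ws (S n)) = fv.dim (Pre ws (S N))"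
    using nat_anti_stab[of "\<lambda>n. fv.dim (Pre ws (S n))", OF a1] by blast
  have sub: "S n \<subseteq> S N" if "N \<le> n" for n
    using that
  proof (induction n rule: dec_induct)
    case base then show ?case by simp
  next
    case (step n) then show ?case using anti[of n] by blast
  qed
  have "S n = S N" if "N \<le> n" for n
  proof -
    have "Pre ws (S n) = Pre ws (S N)"
      by (rule eq_by_dim[OF Pre_subspace[OF wsV S] Pre_subspace[OF wsV S] Pre_mono[OF sub[OF that]] _ Pre_span])
         (use N[OF that] in auto)
    then show ?thesis using Pre_inj[OF ws SV SV] by metis
  qed
  then show ?thesis by blast
qed

lemma sub_fdl:
  assumes ws: "fdl ws" and S: "ksub S"
  shows "\<exists>ss. set ss \<subseteq> S \<and> (\<forall>x\<in>S. \<exists>c. x = lcomb ss c)"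
proof -
  interpret fv: vector_space fsc by (rule vs_fsc)
  have wsV: "set ws \<subseteq> V" using ws unfolding fdl_def by auto
  have SV: "S \<subseteq> V" using S unfolding ksub_def by auto
  obtain BS where BS: "BS \<subseteq> Pre ws S" "fv.independent BS" "Pre ws S \<subseteq> fv.span BS"
    using fv.basis_exists by metis
  have "BS \<subseteq> fv.span (unitv ` {..<length ws})" using BS(1) Pre_span[of ws S] by (rule subset_trans)
  then have fin: "finite BS" using fv.independent_span_bound[OF _ BS(2), of "unitv ` {..<length ws}"] by simp
  obtain bl where bl: "set bl = BS" "distinct bl" using finite_distinct_list[OF fin] by metis
  define ss where "ss = map (lcomb ws) bl"
  have ssS: "set ss \<subseteq> S" using BS(1) bl unfolding ss_def Pre_def by auto
  have "\<exists>c. x = lcomb ss c" if x: "x \<in> S" for x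
  proof -
    have "x \<in> V" using x SV by auto
    then obtain c where c: "x = lcomb ws c" using ws unfolding fdl_def by metis
    define c' where "c' = (\<lambda>i. if i < length ws then c i else 0)"
    have l: "lcomb ws c' = x" using c lcomb_trunc[of ws c] unfolding c'_def by simp
    have "c' \<in> Vd (length ws)" unfolding c'_def Vd_def by simp
    then have "c' \<in> Pre ws S" using l x unfolding Pre_def by simp
    then have "c' \<in> fv.span BS" using BS(3) by blast
    then obtain u where u: "c' = (\<Sum>v\<in>BS. fsc (u v) v)" using fv.span_finite[OF fin] by auto
    also have "\<dots> = (\<Sum>i<length bl. fsc (u (bl ! i)) (bl ! i))"
      using sum_distinct_nth[OF bl(2), of "\<lambda>v. fsc (u v) v"] bl(1) by simp
    finally have "x = lcomb ws (\<Sum>i<length bl. fsc (u (bl ! i)) (bl ! i))"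
      using l by simp
    also have "\<dots> = gsum add z (\<lambda>i. lcomb ws (fsc (u (bl ! i)) (bl ! i))) (length bl)"
      using wsV by (rule lcomb_sum)
    also have "\<dots> = gsum add z (\<lambda>i. sc (u (bl ! i)) (lcomb ws (bl ! i))) (length bl)"
      using wsV by (simp add: lcomb_sc)
    also have "\<dots> = lcomb ss (\<lambda>i. u (bl ! i))"
    proof -
      have "lcomb ss (\<lambda>i. u (bl ! i)) = gsum add z (\<lambda>i. sc (u (bl ! i)) (ss ! i)) (length ss)"
        by (rule lcomb_def)
      also have "\<dots> = gsum add z (\<lambda>i. sc (u (bl ! i)) (lcomb ws (bl ! i))) (length bl)"
        unfolding ss_def by (simp only: length_map) (rule gsum_cong, simp)
      finally show ?thesis by simp
    qed
    finally show ?thesis by blast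
  qed
  then show ?thesis using ssS by blast
qed

lemma fdl_inj: "fdl ws \<Longrightarrow> \<exists>j::'v \<Rightarrow> nat \<Rightarrow> 'k. inj_on j V"
proof -
  assume ws: "fdl ws"
  define j where "j x = (SOME c. x = lcomb ws c)" for x
  have jx: "x = lcomb ws (j x)" if "x \<in> V" for x
  proof -
    have "\<exists>c. x = lcomb ws c" using ws that unfolding fdl_def by blast
    then show ?thesis unfolding j_def by (rule someI_ex)
  qed
  have "inj_on j V"
  proof (rule inj_onI)
    fix x y assume "x \<in> V" "y \<in> V" "j x = j y"
    then show "x = y" using jx[of x] jx[of y] by simp
  qed
  then show ?thesis by blast
qed

end


context rm
begin

lemma submod_ksub: "submod R M S \<Longrightarrow> ksub S"
  unfolding submod_def ksub_def by blast

lemma fitting: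
  assumes ws: "fdl ws" and ind: "indecomposable R M" and h: "hom R M M \<psi>"
  shows "\<exists>n\<ge>1. (\<forall>x\<in>mcar M. (\<psi> ^^ n) x = mzero M) \<or>
     ((\<forall>x\<in>mcar M. (\<psi> ^^ n) x = mzero M \<longrightarrow> x = mzero M) \<and> (\<psi> ^^ n) ` mcar M = mcar M)"
proof -
  interpret MM: rm2 R M M by unfold_locales
  define K where "K n = {x \<in> mcar M. (\<psi> ^^ n) x = mzero M}" for n
  define I where "I n = (\<psi> ^^ n) ` mcar M" for n
  have hn: "hom R M M (\<psi> ^^ n)" for n by (rule hom_funpow[OF h])
  have Ksub: "submod R M (K n)" for n unfolding K_def by (rule MM.ker_submod[OF hn])
  have Isub: "submod R M (I n)" for n unfolding I_def by (rule MM.img_submod[OF hn])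
  have Kmono: "K n \<subseteq> K (Suc n)" for n
  proof
    fix x assume "x \<in> K n"
    then show "x \<in> K (Suc n)" unfolding K_def using MM.hom_z[OF h] by simp
  qed
  have Ianti: "I (Suc n) \<subseteq> I n" for n
  proof
    fix x assume "x \<in> I (Suc n)"
    then obtain y where y: "y \<in> mcar M" "x = (\<psi> ^^ Suc n) y" unfolding I_def by auto
    then have "x = (\<psi> ^^ n) (\<psi> y)" by (simp add: funpow_Suc_right del: funpow.simps)
    then show "x \<in> I n" unfolding I_def using y(1) MM.hom_in[OF h] by blast
  qed
  obtain N1 where N1: "\<forall>n\<ge>N1. K n = K N1"
    using chain_stab_mono[of ws K, OF ws submod_ksub[OF Ksub] Kmono] by blast
  obtain N2 where N2: "\<forall>n\<ge>N2. I n = I N2"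
    using chain_stab_anti[of ws I, OF ws submod_ksub[OF Isub] Ianti] by blast
  define n where "n = Suc (max N1 N2)"
  have n1: "n \<ge> 1" unfolding n_def by simp
  have KK: "K (n + n) = K n" using N1 unfolding n_def by (metis le_add1 max.cobounded1 le_SucI le_trans)
  have II: "I (n + n) = I n" using N2 unfolding n_def by (metis le_add1 max.cobounded2 le_SucI le_trans)
  have pow_add: "(\<psi> ^^ (n + n)) x = (\<psi> ^^ n) ((\<psi> ^^ n) x)" for x by (simp add: funpow_add)
  have inter: "K n \<inter> I n = {mzero M}"
  proof
    show "{mzero M} \<subseteq> K n \<inter> I n" using Ksub Isub unfolding submod_def by auto
    show "K n \<inter> I n \<subseteq> {mzero M}"
    proof
      fix x assume x: "x \<in> K n \<inter> I n"
      then obtain y where y: "y \<in> mcar M" "x = (\<psi> ^^ n) y" unfolding I_def by auto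
      have "(\<psi> ^^ (n + n)) y = mzero M" using x y pow_add unfolding K_def by simp
      then have "y \<in> K (n + n)" using y unfolding K_def by simp
      then have "y \<in> K n" using KK by simp
      then show "x \<in> {mzero M}" using y unfolding K_def by simp
    qed
  qed
  have sum: "msum_set M (K n) (I n) = mcar M"
  proof
    have "K n \<subseteq> mcar M" "I n \<subseteq> mcar M" using Ksub Isub unfolding submod_def by auto
    then show "msum_set M (K n) (I n) \<subseteq> mcar M"
      unfolding msum_set_def by (auto intro: add_in)
    show "mcar M \<subseteq> msum_set M (K n) (I n)"
    proof
      fix x assume x: "x \<in> mcar M"
      have "(\<psi> ^^ n) x \<in> I (n + n)" using II x unfolding I_def by auto
      then obtain y where y: "y \<in> mcar M" "(\<psi> ^^ n) x = (\<psi> ^^ (n + n)) y" unfolding I_def by auto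
      have yin: "(\<psi> ^^ n) y \<in> mcar M" using y(1) MM.hom_in[OF hn] by simp
      have "(\<psi> ^^ n) (sub x ((\<psi> ^^ n) y)) = sub ((\<psi> ^^ n) x) ((\<psi> ^^ n) ((\<psi> ^^ n) y))"
        using MM.hom_sub[OF hn x yin] .
      also have "\<dots> = mzero M" using y pow_add x MM.hom_in[OF hn] by simp
      finally have "sub x ((\<psi> ^^ n) y) \<in> K n" unfolding K_def using x yin by simp
      moreover have "(\<psi> ^^ n) y \<in> I n" using y(1) unfolding I_def by simp
      moreover have "x = madd M (sub x ((\<psi> ^^ n) y)) ((\<psi> ^^ n) y)" using sub_add[OF x yin] by simp
      ultimately show "x \<in> msum_set M (K n) (I n)" unfolding msum_set_def by blast
    qed
  qed
  have "K n = {mzero M} \<or> I n = {mzero M}"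
    using ind Ksub Isub inter sum unfolding indecomposable_def by blast
  then show ?thesis
  proof
    assume K0: "K n = {mzero M}"
    have "I n = mcar M"
    proof
      show "I n \<subseteq> mcar M" using Isub unfolding submod_def by auto
      show "mcar M \<subseteq> I n"
      proof
        fix x assume "x \<in> mcar M"
        then obtain u v where "u \<in> K n" "v \<in> I n" "x = madd M u v" using sum unfolding msum_set_def by blast
        then show "x \<in> I n" using K0 Isub unfolding submod_def by auto
      qed
    qed
    moreover have "\<forall>x\<in>mcar M. (\<psi> ^^ n) x = mzero M \<longrightarrow> x = mzero M" using K0 unfolding K_def by auto
    ultimately show ?thesis using n1 unfolding I_def by blast
  next
    assume "I n = {mzero M}"
    then have "\<forall>x\<in>mcar M. (\<psi> ^^ n) x = mzero M" unfolding I_def by auto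
    then show ?thesis using n1 by blast
  qed
qed

end


definition tr :: "('k, 'r, 'm) rmod \<Rightarrow> ('m \<Rightarrow> 'x) \<Rightarrow> ('k, 'r, 'x) rmod" where
  "tr M j = \<lparr>mcar = j ` mcar M,
     madd = \<lambda>x y. j (madd M (the_inv_into (mcar M) j x) (the_inv_into (mcar M) j y)),
     mzero = j (mzero M),
     msmult = \<lambda>c x. j (msmult M c (the_inv_into (mcar M) j x)),
     mact = \<lambda>x r. j (mact M (the_inv_into (mcar M) j x) r)\<rparr>"

lemma tr_rmod:
  assumes M: "is_rmod R M" and j: "inj_on j (mcar M)"
  shows "is_rmod R (tr M j)"
proof -
  interpret rm R M by (rule rm.intro[OF M])
  have ji[simp]: "a \<in> mcar M \<Longrightarrow> the_inv_into (mcar M) j (j a) = a" for a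
    using the_inv_into_f_f[OF j] by simp
  show ?thesis
    unfolding is_rmod_def kvs_def tr_def
    by (auto simp: assoc linv sc_sc sc_addr sc_addl act_addr act_mul act_addl act_scl act_scr) (simp_all add: comm)
qed

lemma tr_hom:
  assumes "inj_on j (mcar M)" and M: "is_rmod R M"
  shows "hom R M (tr M j) j" and "hom R (tr M j) M (the_inv_into (mcar M) j)"
    and "a \<in> mcar M \<Longrightarrow> the_inv_into (mcar M) j (j a) = a"
    and "inj_on (the_inv_into (mcar M) j) (mcar (tr M j))"
proof -
  have ji[simp]: "a \<in> mcar M \<Longrightarrow> the_inv_into (mcar M) j (j a) = a" for a
    using the_inv_into_f_f[OF assms(1)] by simp
  show "hom R M (tr M j) j" unfolding hom_def tr_def by auto
  show "hom R (tr M j) M (the_inv_into (mcar M) j)"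
  proof -
    interpret rm R M by (rule rm.intro[OF M])
    show ?thesis unfolding hom_def tr_def by auto
  qed
  show "a \<in> mcar M \<Longrightarrow> the_inv_into (mcar M) j (j a) = a" by simp
  show "inj_on (the_inv_into (mcar M) j) (mcar (tr M j))"
    unfolding tr_def by (auto intro!: inj_onI)
qed

lemma fg_image:
  assumes M: "fg_rmod R M" and N: "is_rmod R N" and f: "hom R M N f" and surj: "f ` mcar M = mcar N"
  shows "fg_rmod R N"
proof -
  interpret MN: rm2 R M N by unfold_locales (use M N in \<open>auto simp: fg_rmod_def\<close>)
  obtain gs where gs: "set gs \<subseteq> mcar M" "\<forall>m\<in>mcar M. \<exists>rs. length rs = length gs \<and> set rs \<subseteq> acar R \<and>
        m = vsum (madd M) (mzero M) (map (\<lambda>(g, r). mact M g r) (zip gs rs))"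
    using M unfolding fg_rmod_def by blast
  have "\<exists>rs. length rs = length (map f gs) \<and> set rs \<subseteq> acar R \<and>
        n = vsum (madd N) (mzero N) (map (\<lambda>(g, r). mact N g r) (zip (map f gs) rs))" if n: "n \<in> mcar N" for n
  proof -
    obtain m where m: "m \<in> mcar M" "n = f m" using n surj by auto
    obtain rs where rs: "length rs = length gs" "set rs \<subseteq> acar R"
        "m = vsum (madd M) (mzero M) (map (\<lambda>(g, r). mact M g r) (zip gs rs))" using gs(2) m(1) by blast
    have gi: "i < length gs \<Longrightarrow> gs ! i \<in> mcar M" for i using gs(1) nth_mem by blast
    have ri: "i < length gs \<Longrightarrow> rs ! i \<in> acar R" for i using rs(1,2) nth_mem by (metis subsetD)
    have "set (map (\<lambda>(g, r). mact M g r) (zip gs rs)) \<subseteq> mcar M"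
      using gi ri rs(1) by (auto simp: set_zip)
    then have "m = gsum (madd M) (mzero M) (\<lambda>i. map (\<lambda>(g, r). mact M g r) (zip gs rs) ! i) (length gs)"
      using rs(3) rs(1) by (simp add: MN.M.vsum_gsum)
    also have "\<dots> = gsum (madd M) (mzero M) (\<lambda>i. mact M (gs ! i) (rs ! i)) (length gs)"
      using rs(1) by (intro MN.M.gsum_cong) simp
    finally have "m = gsum (madd M) (mzero M) (\<lambda>i. mact M (gs ! i) (rs ! i)) (length gs)" .
    then have "n = gsum (madd N) (mzero N) (\<lambda>i. f (mact M (gs ! i) (rs ! i))) (length gs)"
      using m(2) MN.hom_gsum[OF f] gi ri by simp
    also have "\<dots> = gsum (madd N) (mzero N) (\<lambda>i. mact N (f (gs ! i)) (rs ! i)) (length gs)"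
      using gi ri MN.hom_act[OF f] by (intro MN.N.gsum_cong) simp
    also have "\<dots> = gsum (madd N) (mzero N) (\<lambda>i. map (\<lambda>(g, r). mact N g r) (zip (map f gs) rs) ! i) (length gs)"
      using rs(1) by (intro MN.N.gsum_cong) simp
    also have "\<dots> = vsum (madd N) (mzero N) (map (\<lambda>(g, r). mact N g r) (zip (map f gs) rs))"
    proof -
      have "set (map (\<lambda>(g, r). mact N g r) (zip (map f gs) rs)) \<subseteq> mcar N"
        using gi ri rs(1) MN.hom_in[OF f] by (auto simp: set_zip)
      then show ?thesis using rs(1) by (simp add: MN.N.vsum_gsum)
    qed
    finally show ?thesis using rs by auto
  qed
  moreover have "set (map f gs) \<subseteq> mcar N" using gs(1) MN.hom_in[OF f] by auto
  ultimately show ?thesis using N unfolding fg_rmod_def by blast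
qed

lemma tr_fg:
  assumes M: "fg_rmod R M" and j: "inj_on j (mcar M)"
  shows "fg_rmod R (tr M j)"
proof -
  have MM: "is_rmod R M" using M unfolding fg_rmod_def by auto
  show ?thesis
    by (rule fg_image[OF M tr_rmod[OF MM j] tr_hom(1)[OF j MM]]) (simp add: tr_def)
qed

lemma proj_gen:
  fixes X :: "('k::field, 'r, 'x) rmod" and Y :: "('k, 'r, 'y) rmod"
    and jX :: "'x \<Rightarrow> nat \<Rightarrow> 'k" and jY :: "'y \<Rightarrow> nat \<Rightarrow> 'k"
  assumes P: "projective_in R P" and X: "fg_rmod R X" and Y: "fg_rmod R Y"
    and jX: "inj_on jX (mcar X)" and jY: "inj_on jY (mcar Y)"
    and p: "hom R X Y p" "p ` mcar X = mcar Y" and h: "hom R P Y h"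
  shows "\<exists>h'. hom R P X h' \<and> (\<forall>m\<in>mcar P. p (h' m) = h m)"
proof -
  have MX: "is_rmod R X" and MY: "is_rmod R Y" using X Y unfolding fg_rmod_def by auto
  let ?X = "tr X jX" and ?Y = "tr Y jY" and ?iX = "the_inv_into (mcar X) jX"
  let ?p = "\<lambda>x. jY (p (?iX x))" and ?h = "\<lambda>m. jY (h m)"
  have hp: "hom R ?X ?Y ?p"
    by (rule hom_comp[OF tr_hom(2)[OF jX MX] hom_comp[OF p(1) tr_hom(1)[OF jY MY]]])
  have sp: "?p ` mcar ?X = mcar ?Y"
  proof -
    have "?p ` mcar ?X = (\<lambda>x. jY (p x)) ` mcar X"
      unfolding tr_def using tr_hom(3)[OF jX MX] by (auto simp: image_iff)
    also have "\<dots> = jY ` (p ` mcar X)" by (simp add: image_image)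
    also have "\<dots> = mcar ?Y" using p(2) unfolding tr_def by simp
    finally show ?thesis .
  qed
  have hh: "hom R P ?Y ?h" by (rule hom_comp[OF h tr_hom(1)[OF jY MY]])
  obtain h'' where h'': "hom R P ?X h''" "\<forall>m\<in>mcar P. ?p (h'' m) = ?h m"
    using P tr_fg[OF X jX] tr_fg[OF Y jY] hp sp hh unfolding projective_in_def by blast
  have hom': "hom R P X (\<lambda>m. ?iX (h'' m))" by (rule hom_comp[OF h''(1) tr_hom(2)[OF jX MX]])
  have "p (?iX (h'' m)) = h m" if m: "m \<in> mcar P" for m
  proof -
    have "?iX (h'' m) \<in> mcar X" using hom' m unfolding hom_def by auto
    then have "p (?iX (h'' m)) \<in> mcar Y" using p(1) unfolding hom_def by auto
    moreover have "h m \<in> mcar Y" using h m unfolding hom_def by auto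
    ultimately show ?thesis using h''(2) m jY by (meson inj_onD)
  qed
  then show ?thesis using hom' by blast
qed

lemma inj_gen:
  fixes X :: "('k::field, 'r, 'x) rmod" and Y :: "('k, 'r, 'y) rmod"
    and jX :: "'x \<Rightarrow> nat \<Rightarrow> 'k" and jY :: "'y \<Rightarrow> nat \<Rightarrow> 'k"
  assumes E: "injective_in R E" and X: "fg_rmod R X" and Y: "fg_rmod R Y"
    and jX: "inj_on jX (mcar X)" and jY: "inj_on jY (mcar Y)"
    and u: "hom R X Y u" "inj_on u (mcar X)" and h: "hom R X E h"
  shows "\<exists>h'. hom R Y E h' \<and> (\<forall>x\<in>mcar X. h' (u x) = h x)"
proof -
  have MX: "is_rmod R X" and MY: "is_rmod R Y" using X Y unfolding fg_rmod_def by auto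
  let ?X = "tr X jX" and ?Y = "tr Y jY" and ?iX = "the_inv_into (mcar X) jX"
  let ?u = "\<lambda>x. jY (u (?iX x))" and ?h = "\<lambda>x. h (?iX x)"
  have hu: "hom R ?X ?Y ?u"
    by (rule hom_comp[OF tr_hom(2)[OF jX MX] hom_comp[OF u(1) tr_hom(1)[OF jY MY]]])
  have iu: "inj_on ?u (mcar ?X)"
  proof (rule inj_onI)
    fix a b assume a: "a \<in> mcar ?X" and b: "b \<in> mcar ?X" and e: "?u a = ?u b"
    obtain a' b' where ab: "a' \<in> mcar X" "b' \<in> mcar X" "a = jX a'" "b = jX b'"
      using a b unfolding tr_def by auto
    have "jY (u a') = jY (u b')" using e ab tr_hom(3)[OF jX MX] by simp
    then have "u a' = u b'" using jY u(1) ab unfolding hom_def by (meson image_subset_iff inj_onD)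
    then have "a' = b'" using u(2) ab by (meson inj_onD)
    then show "a = b" using ab by simp
  qed
  have hh: "hom R ?X E ?h" by (rule hom_comp[OF tr_hom(2)[OF jX MX] h])
  obtain h'' where h'': "hom R ?Y E h''" "\<forall>x\<in>mcar ?X. h'' (?u x) = ?h x"
    using E tr_fg[OF X jX] tr_fg[OF Y jY] hu iu hh unfolding injective_in_def by blast
  have hom': "hom R Y E (\<lambda>y. h'' (jY y))" by (rule hom_comp[OF tr_hom(1)[OF jY MY] h''(1)])
  have "h'' (jY (u x)) = h x" if x: "x \<in> mcar X" for x
  proof -
    have "jX x \<in> mcar ?X" using x unfolding tr_def by auto
    then have "h'' (?u (jX x)) = ?h (jX x)" using h''(2) by blast
    then show ?thesis using tr_hom(3)[OF jX MX x] by simp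
  qed
  then show ?thesis using hom' by blast
qed


definition dg :: "('k, 'a, 'b) kalg_scheme \<Rightarrow> nat \<Rightarrow> 'a \<Rightarrow> ('k::zero, 'a) rep" where
  "dg A i a = (\<lambda>k. if k = i then a else azero A, \<lambda>k x. 0)"
definition sg :: "('k, 'a, 'b) kalg_scheme \<Rightarrow> nat \<Rightarrow> ('a \<Rightarrow> 'k) \<Rightarrow> ('k::zero, 'a) rep" where
  "sg A i \<phi> = (\<lambda>k. azero A, \<lambda>k. if k = i then \<phi> else (\<lambda>x. 0))"
definition eN :: "('k, 'a, 'b) ualg_scheme \<Rightarrow> nat \<Rightarrow> ('k::zero, 'a) rep" where
  "eN A n = (\<lambda>k. if k \<le> n then aone A else azero A, \<lambda>k x. 0)"
definition trn :: "('k, 'a, 'b) kalg_scheme \<Rightarrow> nat \<Rightarrow> ('k::zero, 'a) rep \<Rightarrow> ('k, 'a) rep" where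
  "trn A n r = (\<lambda>k. if k \<le> n then fst r k else azero A, \<lambda>k. if k \<le> n then snd r k else (\<lambda>x. 0))"
definition bnd :: "('k, 'a, 'b) kalg_scheme \<Rightarrow> nat \<Rightarrow> ('k::zero, 'a) rep \<Rightarrow> bool" where
  "bnd A n r \<longleftrightarrow> (\<forall>k>n. fst r k = azero A \<and> snd r k = (\<lambda>x. 0))"

lemma mem_R: "r \<in> acar (rep_alg A) \<longleftrightarrow> (\<forall>i. fst r i \<in> acar A) \<and> finite {i. fst r i \<noteq> azero A} \<and>
   (\<forall>i. snd r i \<in> dual A) \<and> snd r 0 = (\<lambda>x. 0) \<and> finite {i. snd r i \<noteq> (\<lambda>x. 0)}"
  by (cases r) (simp add: rep_alg_def)

lemma aadd_R: "aadd (rep_alg A) r s = (\<lambda>i. aadd A (fst r i) (fst s i), \<lambda>i x. snd r i x + snd s i x)"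
  by (simp add: rep_alg_def case_prod_beta)
lemma asmult_R: "asmult (rep_alg A) c r = (\<lambda>i. asmult A c (fst r i), \<lambda>i x. c * snd r i x)"
  by (simp add: rep_alg_def case_prod_beta)
lemma amul_R: "amul (rep_alg A) r s = (\<lambda>i. amul A (fst r i) (fst s i),
   \<lambda>i. if i = 0 then (\<lambda>x. 0) else (\<lambda>x. dlact A (fst r i) (snd s i) x + dract A (snd r i) (fst s (i - 1)) x))"
  by (simp add: rep_alg_def case_prod_beta)
lemma azero_R: "azero (rep_alg A) = (\<lambda>i. azero A, \<lambda>i x. 0)"
  by (simp add: rep_alg_def)

locale falg =
  fixes A :: "('k::field, 'a) ualg"
  assumes fd: "fd_alg A"
begin

lemma ualg: "is_ualg A" using fd unfolding fd_alg_def by auto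
lemma kalg: "is_kalg A" using ualg unfolding is_ualg_def by auto

sublocale AK: kv "acar A" "aadd A" "azero A" "asmult A"
  using kalg unfolding is_kalg_def by unfold_locales auto

lemma mul_in[simp]: "x \<in> acar A \<Longrightarrow> y \<in> acar A \<Longrightarrow> amul A x y \<in> acar A"
  using kalg unfolding is_kalg_def by auto
lemma distl: "x \<in> acar A \<Longrightarrow> y \<in> acar A \<Longrightarrow> w \<in> acar A \<Longrightarrow> amul A x (aadd A y w) = aadd A (amul A x y) (amul A x w)"
  using kalg unfolding is_kalg_def by auto
lemma distr: "x \<in> acar A \<Longrightarrow> y \<in> acar A \<Longrightarrow> w \<in> acar A \<Longrightarrow> amul A (aadd A x y) w = aadd A (amul A x w) (amul A y w)"
  using kalg unfolding is_kalg_def by auto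
lemma one_in[simp]: "aone A \<in> acar A" using ualg unfolding is_ualg_def by auto
lemma one_l[simp]: "x \<in> acar A \<Longrightarrow> amul A (aone A) x = x" using ualg unfolding is_ualg_def by auto
lemma one_r[simp]: "x \<in> acar A \<Longrightarrow> amul A x (aone A) = x" using ualg unfolding is_ualg_def by auto
lemma zero_l[simp]: "x \<in> acar A \<Longrightarrow> amul A (azero A) x = azero A"
proof -
  assume x: "x \<in> acar A"
  have "aadd A (amul A (azero A) x) (amul A (azero A) x) = amul A (azero A) x"
    using distr[of "azero A" "azero A" x] x by simp
  then show ?thesis using AK.add_left_eq[OF mul_in[OF AK.z_in x] mul_in[OF AK.z_in x]] by simp
qed
lemma zero_r[simp]: "x \<in> acar A \<Longrightarrow> amul A x (azero A) = azero A"
proof -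
  assume x: "x \<in> acar A"
  have "aadd A (amul A x (azero A)) (amul A x (azero A)) = amul A x (azero A)"
    using distl[of x "azero A" "azero A"] x by simp
  then show ?thesis using AK.add_left_eq[OF mul_in[OF x AK.z_in] mul_in[OF x AK.z_in]] by simp
qed

lemma dual_add: "\<phi> \<in> dual A \<Longrightarrow> x \<in> acar A \<Longrightarrow> y \<in> acar A \<Longrightarrow> \<phi> (aadd A x y) = \<phi> x + \<phi> y"
  unfolding dual_def by auto
lemma dual_sc: "\<phi> \<in> dual A \<Longrightarrow> x \<in> acar A \<Longrightarrow> \<phi> (asmult A c x) = c * \<phi> x"
  unfolding dual_def by auto
lemma dual_out: "\<phi> \<in> dual A \<Longrightarrow> x \<notin> acar A \<Longrightarrow> \<phi> x = 0"
  unfolding dual_def by auto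
lemma dual_zero[simp]: "\<phi> \<in> dual A \<Longrightarrow> \<phi> (azero A) = 0"
  using dual_sc[of \<phi> "azero A" 0] by simp
lemma zero_dual[simp]: "(\<lambda>x. 0) \<in> dual A" unfolding dual_def by auto
lemma add_dual: "\<phi> \<in> dual A \<Longrightarrow> \<psi> \<in> dual A \<Longrightarrow> (\<lambda>x. \<phi> x + \<psi> x) \<in> dual A"
  unfolding dual_def by (auto simp: algebra_simps)
lemma sc_dual: "\<phi> \<in> dual A \<Longrightarrow> (\<lambda>x. c * \<phi> x) \<in> dual A"
  unfolding dual_def by (auto simp: algebra_simps)

abbreviation "RA \<equiv> rep_alg A"

lemma azero_R_in[simp]: "azero RA \<in> acar RA"
  by (simp add: mem_R azero_R)

lemma aadd_R_in[simp]: "r \<in> acar RA \<Longrightarrow> s \<in> acar RA \<Longrightarrow> aadd RA r s \<in> acar RA"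
proof -
  assume r: "r \<in> acar RA" and s: "s \<in> acar RA"
  have f1: "{i. aadd A (fst r i) (fst s i) \<noteq> azero A} \<subseteq> {i. fst r i \<noteq> azero A} \<union> {i. fst s i \<noteq> azero A}"
    using r s by (auto simp: mem_R)
  have f2: "{i. (\<lambda>x. snd r i x + snd s i x) \<noteq> (\<lambda>x. 0)} \<subseteq> {i. snd r i \<noteq> (\<lambda>x. 0)} \<union> {i. snd s i \<noteq> (\<lambda>x. 0)}"
    by auto
  show ?thesis using r s finite_subset[OF f1] finite_subset[OF f2]
    by (auto simp: mem_R aadd_R add_dual)
qed

lemma asmult_R_in[simp]: "r \<in> acar RA \<Longrightarrow> asmult RA c r \<in> acar RA"
proof -
  assume r: "r \<in> acar RA"
  have f1: "{i. asmult A c (fst r i) \<noteq> azero A} \<subseteq> {i. fst r i \<noteq> azero A}"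
    by auto
  have f2: "{i. (\<lambda>x. c * snd r i x) \<noteq> (\<lambda>x. 0)} \<subseteq> {i. snd r i \<noteq> (\<lambda>x. 0)}"
    by auto
  show ?thesis using r finite_subset[OF f1] finite_subset[OF f2]
    by (auto simp: mem_R asmult_R sc_dual)
qed

lemma dg_in[simp]: "a \<in> acar A \<Longrightarrow> dg A i a \<in> acar RA"
proof -
  assume a: "a \<in> acar A"
  have "{k. (if k = i then a else azero A) \<noteq> azero A} \<subseteq> {i}" by auto
  then show ?thesis using a finite_subset by (auto simp: mem_R dg_def)
qed

lemma sg_in[simp]: "\<phi> \<in> dual A \<Longrightarrow> i \<noteq> 0 \<Longrightarrow> sg A i \<phi> \<in> acar RA"
proof -
  assume a: "\<phi> \<in> dual A" "i \<noteq> 0"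
  have "{k. (if k = i then \<phi> else (\<lambda>x. 0)) \<noteq> (\<lambda>x. 0)} \<subseteq> {i}" by auto
  then show ?thesis using a finite_subset by (auto simp: mem_R sg_def)
qed

lemma eN_in[simp]: "eN A n \<in> acar RA"
proof -
  have "{k. (if k \<le> n then aone A else azero A) \<noteq> azero A} \<subseteq> {..n}" by auto
  then show ?thesis using finite_subset by (auto simp: mem_R eN_def)
qed

lemma trn_in[simp]: "r \<in> acar RA \<Longrightarrow> trn A n r \<in> acar RA"
proof -
  assume r: "r \<in> acar RA"
  have "{k. (if k \<le> n then fst r k else azero A) \<noteq> azero A} \<subseteq> {..n}" by auto
  moreover have "{k. (if k \<le> n then snd r k else (\<lambda>x. 0)) \<noteq> (\<lambda>x. 0)} \<subseteq> {..n}" by auto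
  ultimately show ?thesis using r finite_subset by (auto simp: mem_R trn_def)
qed

lemma bnd_trn: "bnd A n (trn A n r)" unfolding bnd_def trn_def by auto

lemma bnd_mono: "bnd A n r \<Longrightarrow> n \<le> m \<Longrightarrow> bnd A m r" unfolding bnd_def by auto

lemma bnd_ex: "r \<in> acar RA \<Longrightarrow> \<exists>n. bnd A n r"
proof -
  assume r: "r \<in> acar RA"
  let ?F = "{i. fst r i \<noteq> azero A} \<union> {i. snd r i \<noteq> (\<lambda>x. 0)}"
  have fin: "finite ?F" using r by (simp add: mem_R)
  have "bnd A (Max (insert 0 ?F)) r"
    unfolding bnd_def using fin by (auto dest: Max_ge[of "insert 0 ?F", simplified])
  then show ?thesis by blast
qed

lemma mul_eN_right: "r \<in> acar RA \<Longrightarrow> bnd A n r \<Longrightarrow> amul RA r (eN A n) = r"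
proof -
  assume r: "r \<in> acar RA" and b: "bnd A n r"
  have f: "amul A (fst r i) (if i \<le> n then aone A else azero A) = fst r i" for i
    using r b by (auto simp: mem_R bnd_def)
  have s: "(if i = 0 then (\<lambda>x. 0) else (\<lambda>x. dlact A (fst r i) (\<lambda>x. 0) x +
      dract A (snd r i) (if i - 1 \<le> n then aone A else azero A) x)) = snd r i" for i
  proof (cases "i = 0")
    case True then show ?thesis using r by (simp add: mem_R)
  next
    case False
    have "dract A (snd r i) (if i - 1 \<le> n then aone A else azero A) x = snd r i x" for x
    proof (cases "i \<le> n")
      case True
      then show ?thesis using r dual_out[of "snd r i" x] by (auto simp: dract_def mem_R)
    next
      case False
      then show ?thesis using b by (auto simp: dract_def bnd_def)
    qed
    then show ?thesis using False by (auto simp: dlact_def)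
  qed
  show ?thesis
  proof (rule prod_eqI)
    show "fst (amul RA r (eN A n)) = fst r" unfolding amul_R eN_def using f by auto
    show "snd (amul RA r (eN A n)) = snd r"
    proof
      fix i show "snd (amul RA r (eN A n)) i = snd r i" using s[of i] unfolding amul_R eN_def by (simp only: fst_conv snd_conv)
    qed
  qed
qed

lemma mul_eN_left: "r \<in> acar RA \<Longrightarrow> amul RA (eN A n) r = trn A n r"
proof -
  assume r: "r \<in> acar RA"
  have f: "amul A (if i \<le> n then aone A else azero A) (fst r i) = (if i \<le> n then fst r i else azero A)" for i
    using r by (auto simp: mem_R)
  have s: "(if i = 0 then (\<lambda>x. 0) else (\<lambda>x. dlact A (if i \<le> n then aone A else azero A) (snd r i) x +
      dract A (\<lambda>x. 0) (fst r (i - 1)) x)) = (if i \<le> n then snd r i else (\<lambda>x. 0))" for i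
  proof (cases "i = 0")
    case True then show ?thesis using r by (simp add: mem_R)
  next
    case False
    have "dlact A (if i \<le> n then aone A else azero A) (snd r i) x = (if i \<le> n then snd r i x else 0)" for x
      using r dual_out[of "snd r i" x] by (auto simp: dlact_def mem_R)
    then show ?thesis using False by (auto simp: dract_def)
  qed
  show ?thesis
  proof (rule prod_eqI)
    show "fst (amul RA (eN A n) r) = fst (trn A n r)" unfolding amul_R eN_def trn_def using f by auto
    show "snd (amul RA (eN A n) r) = snd (trn A n r)"
    proof
      fix i show "snd (amul RA (eN A n) r) i = snd (trn A n r) i" using s[of i] unfolding amul_R eN_def trn_def by (simp only: fst_conv snd_conv)
    qed
  qed
qed

end


context falg
begin

sublocale DK: kv "dual A" "\<lambda>\<phi> \<psi> x. \<phi> x + \<psi> x" "\<lambda>x. 0" "\<lambda>c \<phi> x. c * \<phi> x"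
  by unfold_locales (auto simp: kvs_def add_dual sc_dual algebra_simps)

lemma fd_bs: "\<exists>bs. set bs \<subseteq> acar A \<and> (\<forall>x\<in>acar A. \<exists>cs. x = gsum (aadd A) (azero A) (\<lambda>t. asmult A (cs t) (bs ! t)) (length bs))"
proof -
  obtain bs where bs: "set bs \<subseteq> acar A" "\<forall>x\<in>acar A. \<exists>cs::'k list. length cs = length bs \<and>
        x = vsum (aadd A) (azero A) (map (\<lambda>(c, b). asmult A c b) (zip cs bs))"
    using fd unfolding fd_alg_def by blast
  have "\<exists>cs. x = gsum (aadd A) (azero A) (\<lambda>t. asmult A (cs t) (bs ! t)) (length bs)" if x: "x \<in> acar A" for x
  proof -
    obtain cs :: "'k list" where cs: "length cs = length bs" "x = vsum (aadd A) (azero A) (map (\<lambda>(c, b). asmult A c b) (zip cs bs))"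
      using bs(2) x by blast
    have "set (map (\<lambda>(c, b). asmult A c b) (zip cs bs)) \<subseteq> acar A"
      using bs(1) by (auto simp: set_zip)
    then have "x = gsum (aadd A) (azero A) (\<lambda>t. map (\<lambda>(c, b). asmult A c b) (zip cs bs) ! t) (length bs)"
      using cs by (simp add: AK.vsum_gsum)
    also have "\<dots> = gsum (aadd A) (azero A) (\<lambda>t. asmult A (cs ! t) (bs ! t)) (length bs)"
      using cs(1) by (intro AK.gsum_cong) simp
    finally show ?thesis by blast
  qed
  then show ?thesis using bs(1) by blast
qed

lemma dual_gsum: "\<phi> \<in> dual A \<Longrightarrow> (\<And>t. t < m \<Longrightarrow> f t \<in> acar A) \<Longrightarrow>
   \<phi> (gsum (aadd A) (azero A) f m) = (\<Sum>t<m. \<phi> (f t))"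
  by (induction m) (auto simp: dual_add)

definition Phi :: "'a list \<Rightarrow> ('a \<Rightarrow> 'k) \<Rightarrow> nat \<Rightarrow> 'k" where
  "Phi bs \<phi> = (\<lambda>t. if t < length bs then \<phi> (bs ! t) else 0)"

lemma Phi_add: "Phi bs (\<lambda>x. \<phi> x + \<psi> x) = Phi bs \<phi> + Phi bs \<psi>"
  unfolding Phi_def by (auto simp: plus_fun_def)
lemma Phi_sc: "Phi bs (\<lambda>x. c * \<phi> x) = fsc c (Phi bs \<phi>)"
  unfolding Phi_def fsc_def by auto
lemma Phi_zero: "Phi bs (\<lambda>x. 0) = 0"
  unfolding Phi_def by (auto simp: zero_fun_def)
lemma Phi_gsum: "Phi bs (gsum (\<lambda>\<phi> \<psi> x. \<phi> x + \<psi> x) (\<lambda>x. 0) g m) = (\<Sum>i<m. Phi bs (g i))"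
  by (induction m) (auto simp: Phi_add Phi_zero)

lemma dual_span: "\<exists>\<psi>s. set \<psi>s \<subseteq> dual A \<and> (\<forall>\<phi>\<in>dual A. \<exists>lam.
    \<phi> = gsum (\<lambda>\<phi> \<psi> x. \<phi> x + \<psi> x) (\<lambda>x. 0) (\<lambda>u x. lam u * (\<psi>s ! u) x) (length \<psi>s))"
proof -
  interpret fv: vector_space fsc by (rule vs_fsc)
  obtain bs where bs: "set bs \<subseteq> acar A" "\<forall>x\<in>acar A. \<exists>cs. x = gsum (aadd A) (azero A) (\<lambda>t. asmult A (cs t) (bs ! t)) (length bs)"
    using fd_bs by blast
  have inj: "\<phi> = \<psi>" if "\<phi> \<in> dual A" "\<psi> \<in> dual A" "Phi bs \<phi> = Phi bs \<psi>" for \<phi> \<psi>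
  proof
    fix x
    show "\<phi> x = \<psi> x"
    proof (cases "x \<in> acar A")
      case True
      then obtain cs where cs: "x = gsum (aadd A) (azero A) (\<lambda>t. asmult A (cs t) (bs ! t)) (length bs)"
        using bs(2) by blast
      have bt: "t < length bs \<Longrightarrow> bs ! t \<in> acar A" for t using bs(1) nth_mem by blast
      have e: "\<phi> (bs ! t) = \<psi> (bs ! t)" if "t < length bs" for t
        using that fun_cong[OF \<open>Phi bs \<phi> = Phi bs \<psi>\<close>, of t] unfolding Phi_def by simp
      have "\<phi> x = (\<Sum>t<length bs. cs t * \<phi> (bs ! t))"
        unfolding cs using that(1) bt by (simp add: dual_gsum dual_sc)
      also have "\<dots> = (\<Sum>t<length bs. cs t * \<psi> (bs ! t))" using e by simp
      also have "\<dots> = \<psi> x"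
        unfolding cs using that(2) bt by (simp add: dual_gsum dual_sc)
      finally show ?thesis .
    next
      case False then show ?thesis using dual_out[OF that(1) False] dual_out[OF that(2) False] by simp
    qed
  qed
  define W where "W = Phi bs ` dual A"
  have Wsub: "fv.subspace W"
    unfolding fv.subspace_def W_def
  proof (intro conjI ballI allI)
    show "0 \<in> Phi bs ` dual A" by (rule image_eqI[of _ _ "\<lambda>x. 0"]) (simp_all add: Phi_zero)
    fix x y assume "x \<in> Phi bs ` dual A" "y \<in> Phi bs ` dual A"
    then obtain a b where "a \<in> dual A" "b \<in> dual A" "x = Phi bs a" "y = Phi bs b" by auto
    then show "x + y \<in> Phi bs ` dual A" by (intro image_eqI[of _ _ "\<lambda>x. a x + b x"]) (simp_all add: Phi_add add_dual)
  next
    fix c x assume "x \<in> Phi bs ` dual A"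
    then obtain a where "a \<in> dual A" "x = Phi bs a" by auto
    then show "fsc c x \<in> Phi bs ` dual A" by (intro image_eqI[of _ _ "\<lambda>x. c * a x"]) (simp_all add: Phi_sc sc_dual)
  qed
  have WV: "W \<subseteq> fv.span (unitv ` {..<length bs})"
  proof -
    have "W \<subseteq> Vd (length bs)" unfolding W_def Vd_def Phi_def by auto
    then show ?thesis using Vd_span by blast
  qed
  obtain BS where BS: "BS \<subseteq> W" "fv.independent BS" "W \<subseteq> fv.span BS"
    using fv.basis_exists by metis
  have "BS \<subseteq> fv.span (unitv ` {..<length bs})" using BS(1) WV by (rule subset_trans)
  then have fin: "finite BS" using fv.independent_span_bound[OF _ BS(2), of "unitv ` {..<length bs}"] by simp
  obtain bl where bl: "set bl = BS" "distinct bl" using finite_distinct_list[OF fin] by metis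
  define pre where "pre v = (SOME \<psi>. \<psi> \<in> dual A \<and> Phi bs \<psi> = v)" for v
  have pre: "pre v \<in> dual A \<and> Phi bs (pre v) = v" if "v \<in> W" for v
  proof -
    have "\<exists>\<psi>. \<psi> \<in> dual A \<and> Phi bs \<psi> = v" using that unfolding W_def by auto
    then show ?thesis unfolding pre_def by (rule someI_ex)
  qed
  define \<psi>s where "\<psi>s = map pre bl"
  have blW: "i < length bl \<Longrightarrow> bl ! i \<in> W" for i using bl BS(1) nth_mem by blast
  have \<psi>s_in: "set \<psi>s \<subseteq> dual A"
  proof
    fix p assume "p \<in> set \<psi>s"
    then obtain v where "v \<in> set bl" "p = pre v" unfolding \<psi>s_def by auto
    then show "p \<in> dual A" using bl(1) BS(1) pre[of v] by auto
  qed
  have "\<exists>lam. \<phi> = gsum (\<lambda>\<phi> \<psi> x. \<phi> x + \<psi> x) (\<lambda>x. 0) (\<lambda>u x. lam u * (\<psi>s ! u) x) (length \<psi>s)"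
    if \<phi>: "\<phi> \<in> dual A" for \<phi>
  proof -
    have "Phi bs \<phi> \<in> fv.span BS" using \<phi> BS(3) unfolding W_def by blast
    then obtain u where u: "Phi bs \<phi> = (\<Sum>v\<in>BS. fsc (u v) v)" using fv.span_finite[OF fin] by auto
    also have "\<dots> = (\<Sum>i<length bl. fsc (u (bl ! i)) (bl ! i))"
      using sum_distinct_nth[OF bl(2), of "\<lambda>v. fsc (u v) v"] bl(1) by simp
    also have "\<dots> = (\<Sum>i<length bl. Phi bs (\<lambda>x. u (bl ! i) * (\<psi>s ! i) x))"
      using blW pre by (intro sum.cong) (auto simp: \<psi>s_def Phi_sc)
    also have "\<dots> = Phi bs (gsum (\<lambda>\<phi> \<psi> x. \<phi> x + \<psi> x) (\<lambda>x. 0) (\<lambda>i x. u (bl ! i) * (\<psi>s ! i) x) (length bl))"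
      by (simp add: Phi_gsum)
    finally have e: "Phi bs \<phi> = Phi bs (gsum (\<lambda>\<phi> \<psi> x. \<phi> x + \<psi> x) (\<lambda>x. 0) (\<lambda>i x. u (bl ! i) * (\<psi>s ! i) x) (length bl))" .
    have gin: "gsum (\<lambda>\<phi> \<psi> x. \<phi> x + \<psi> x) (\<lambda>x. 0) (\<lambda>i x. u (bl ! i) * (\<psi>s ! i) x) (length bl) \<in> dual A"
      using \<psi>s_in by (intro DK.gsum_in sc_dual) (auto simp: \<psi>s_def)
    have "\<phi> = gsum (\<lambda>\<phi> \<psi> x. \<phi> x + \<psi> x) (\<lambda>x. 0) (\<lambda>i x. u (bl ! i) * (\<psi>s ! i) x) (length bl)"
      by (rule inj[OF \<phi> gin e])
    then show ?thesis unfolding \<psi>s_def by auto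
  qed
  then show ?thesis using \<psi>s_in by blast
qed

end


lemma fg_rm: "fg_rmod R M \<Longrightarrow> rm R M"
  unfolding fg_rmod_def by (simp add: rm.intro)

lemma fg_gsum:
  assumes M: "fg_rmod R M"
  shows "\<exists>gs. set gs \<subseteq> mcar M \<and> (\<forall>m\<in>mcar M. \<exists>r. (\<forall>i<length gs. r i \<in> acar R) \<and>
     m = gsum (madd M) (mzero M) (\<lambda>i. mact M (gs ! i) (r i)) (length gs))"
proof -
  interpret rm R M by (rule fg_rm[OF M])
  obtain gs where gs: "set gs \<subseteq> mcar M" "\<forall>m\<in>mcar M. \<exists>rs. length rs = length gs \<and> set rs \<subseteq> acar R \<and>
        m = vsum (madd M) (mzero M) (map (\<lambda>(g, r). mact M g r) (zip gs rs))"
    using M unfolding fg_rmod_def by blast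
  have "\<exists>r. (\<forall>i<length gs. r i \<in> acar R) \<and> m = gsum (madd M) (mzero M) (\<lambda>i. mact M (gs ! i) (r i)) (length gs)"
    if m: "m \<in> mcar M" for m
  proof -
    obtain rs where rs: "length rs = length gs" "set rs \<subseteq> acar R"
        "m = vsum (madd M) (mzero M) (map (\<lambda>(g, r). mact M g r) (zip gs rs))" using gs(2) m by blast
    have gi: "i < length gs \<Longrightarrow> gs ! i \<in> mcar M" for i using gs(1) nth_mem by blast
    have ri: "i < length gs \<Longrightarrow> rs ! i \<in> acar R" for i using rs(1,2) nth_mem by (metis subsetD)
    have "set (map (\<lambda>(g, r). mact M g r) (zip gs rs)) \<subseteq> mcar M"
      using gi ri rs(1) by (auto simp: set_zip)
    then have "m = gsum (madd M) (mzero M) (\<lambda>i. map (\<lambda>(g, r). mact M g r) (zip gs rs) ! i) (length gs)"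
      using rs(3) rs(1) by (simp add: vsum_gsum)
    also have "\<dots> = gsum (madd M) (mzero M) (\<lambda>i. mact M (gs ! i) (rs ! i)) (length gs)"
      using rs(1) by (intro gsum_cong) simp
    finally show ?thesis using ri by blast
  qed
  then show ?thesis using gs(1) by blast
qed

context falg
begin

lemma act_zeroR:
  assumes M: "rm RA M" and m: "m \<in> mcar M"
  shows "mact M m (azero RA) = mzero M"
proof -
  interpret rm RA M by (rule M)
  have "aadd RA (azero RA) (azero RA) = azero RA" by (simp add: aadd_R azero_R)
  then have "madd M (mact M m (azero RA)) (mact M m (azero RA)) = mact M m (azero RA)"
    using act_addr[OF m azero_R_in azero_R_in] by simp
  then show ?thesis using add_left_eq[OF act_in[OF m azero_R_in] act_in[OF m azero_R_in]] by simp
qed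

lemma fg_unit:
  assumes M: "fg_rmod RA M"
  shows "\<exists>gs n. set gs \<subseteq> mcar M \<and> (\<forall>m\<in>mcar M. mact M m (eN A n) = m) \<and>
     (\<forall>m\<in>mcar M. \<exists>r. (\<forall>i<length gs. r i \<in> acar RA \<and> bnd A n (r i)) \<and>
        m = gsum (madd M) (mzero M) (\<lambda>i. mact M (gs ! i) (r i)) (length gs))"
proof -
  interpret rm RA M by (rule fg_rm[OF M])
  obtain gs where gs: "set gs \<subseteq> mcar M" "\<forall>m\<in>mcar M. \<exists>r. (\<forall>i<length gs. r i \<in> acar RA) \<and>
     m = gsum (madd M) (mzero M) (\<lambda>i. mact M (gs ! i) (r i)) (length gs)"
    using fg_gsum[OF M] by blast
  define L where "L = length gs"
  have gi: "i < L \<Longrightarrow> gs ! i \<in> mcar M" for i using gs(1) nth_mem unfolding L_def by blast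
  have "\<forall>j. \<exists>r. j < L \<longrightarrow> (\<forall>i<L. r i \<in> acar RA) \<and> gs ! j = gsum (madd M) (mzero M) (\<lambda>i. mact M (gs ! i) (r i)) L"
    using gs(2) gi unfolding L_def by blast
  then obtain rr where rr0: "\<forall>j. j < L \<longrightarrow> (\<forall>i<L. rr j i \<in> acar RA) \<and>
      gs ! j = gsum (madd M) (mzero M) (\<lambda>i. mact M (gs ! i) (rr j i)) L"
    using choice[OF \<open>\<forall>j. \<exists>r. _\<close>] by blast
  have rr: "\<And>j. j < L \<Longrightarrow> (\<forall>i<L. rr j i \<in> acar RA) \<and>
      gs ! j = gsum (madd M) (mzero M) (\<lambda>i. mact M (gs ! i) (rr j i)) L"
    using rr0 by blast
  define B where "B j i = (SOME n. bnd A n (rr j i))" for j i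
  define n where "n = Max (insert 0 ((\<lambda>(j, i). B j i) ` ({..<L} \<times> {..<L})))"
  have bn: "bnd A n (rr j i)" if "j < L" "i < L" for j i
  proof -
    have "\<exists>n. bnd A n (rr j i)" using bnd_ex rr[OF that(1)] that(2) by blast
    then have b: "bnd A (B j i) (rr j i)" unfolding B_def by (rule someI_ex)
    have "B j i \<le> n" unfolding n_def using that by (intro Max_ge) auto
    then show ?thesis using bnd_mono[OF b] by blast
  qed
  have ge: "mact M (gs ! j) (eN A n) = gs ! j" if j: "j < L" for j
  proof -
    have ri: "i < L \<Longrightarrow> rr j i \<in> acar RA" for i using rr[OF j] by blast
    have "mact M (gs ! j) (eN A n) = mact M (gsum (madd M) (mzero M) (\<lambda>i. mact M (gs ! i) (rr j i)) L) (eN A n)"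
      using rr[OF j] by simp
    also have "\<dots> = gsum (madd M) (mzero M) (\<lambda>i. mact M (mact M (gs ! i) (rr j i)) (eN A n)) L"
      using gi ri by (intro act_gsum) auto
    also have "\<dots> = gsum (madd M) (mzero M) (\<lambda>i. mact M (gs ! i) (rr j i)) L"
      using gi ri bn[OF j] by (intro gsum_cong) (simp add: act_mul mul_eN_right)
    also have "\<dots> = gs ! j" using rr[OF j] by simp
    finally show ?thesis .
  qed
  have rep: "\<exists>r. (\<forall>i<L. r i \<in> acar RA \<and> bnd A n (r i)) \<and>
        m = gsum (madd M) (mzero M) (\<lambda>i. mact M (gs ! i) (r i)) L" if m: "m \<in> mcar M" for m
  proof -
    obtain r0 where r0: "\<forall>i<L. r0 i \<in> acar RA" "m = gsum (madd M) (mzero M) (\<lambda>i. mact M (gs ! i) (r0 i)) L"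
      using gs(2) m unfolding L_def by blast
    have "m = gsum (madd M) (mzero M) (\<lambda>i. mact M (gs ! i) (trn A n (r0 i))) L"
      unfolding r0(2)
    proof (rule gsum_cong)
      fix i assume i: "i < L"
      have "mact M (gs ! i) (r0 i) = mact M (mact M (gs ! i) (eN A n)) (r0 i)" using ge[OF i] by simp
      also have "\<dots> = mact M (gs ! i) (trn A n (r0 i))"
        using gi[OF i] r0(1) i by (simp add: act_mul mul_eN_left)
      finally show "mact M (gs ! i) (r0 i) = mact M (gs ! i) (trn A n (r0 i))" .
    qed
    then show ?thesis using r0(1) bnd_trn trn_in by (intro exI[of _ "\<lambda>i. trn A n (r0 i)"]) auto
  qed
  have unit: "mact M m (eN A n) = m" if m: "m \<in> mcar M" for m
  proof -
    obtain r where r: "\<forall>i<L. r i \<in> acar RA \<and> bnd A n (r i)"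
        "m = gsum (madd M) (mzero M) (\<lambda>i. mact M (gs ! i) (r i)) L" using rep[OF m] by blast
    have "mact M m (eN A n) = gsum (madd M) (mzero M) (\<lambda>i. mact M (mact M (gs ! i) (r i)) (eN A n)) L"
      unfolding r(2) using gi r(1) by (intro act_gsum) auto
    also have "\<dots> = m"
      unfolding r(2) using gi r(1) by (intro gsum_cong) (simp add: act_mul mul_eN_right)
    finally show ?thesis .
  qed
  show ?thesis using gs(1) unit rep unfolding L_def by blast
qed

end


context kv
begin

lemma lcomb_unit: "set ws \<subseteq> V \<Longrightarrow> t < length ws \<Longrightarrow> lcomb ws (unitv t) = ws ! t"
proof -
  assume ws: "set ws \<subseteq> V" and t: "t < length ws"
  have "m \<le> length ws \<Longrightarrow> gsum add z (\<lambda>i. sc (unitv t i) (ws ! i)) m = (if t < m then ws ! t else z)" for m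
  proof (induction m)
    case 0 then show ?case by simp
  next
    case (Suc m)
    have wm: "ws ! m \<in> V" using Suc.prems ws by simp
    have wt: "ws ! t \<in> V" using t ws by simp
    show ?case using Suc wm wt by (auto simp: unitv_def less_Suc_eq)
  qed
  then show ?thesis unfolding lcomb_def using t by simp
qed

end

lemma concat_memI: "x \<in> set (f a) \<Longrightarrow> a \<in> set xs \<Longrightarrow> x \<in> set (concat (map f xs))"
  by auto

context falg
begin

lemma dg_add: "a \<in> acar A \<Longrightarrow> b \<in> acar A \<Longrightarrow> dg A i (aadd A a b) = aadd RA (dg A i a) (dg A i b)"
  by (simp add: dg_def aadd_R fun_eq_iff)
lemma dg_sc: "dg A i (asmult A c a) = asmult RA c (dg A i a)"
  by (simp add: dg_def asmult_R fun_eq_iff)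
lemma dg_zero: "dg A i (azero A) = azero RA"
  by (simp add: dg_def azero_R fun_eq_iff)
lemma sg_add: "sg A i (\<lambda>x. \<phi> x + \<psi> x) = aadd RA (sg A i \<phi>) (sg A i \<psi>)"
  by (simp add: sg_def aadd_R fun_eq_iff)
lemma sg_sc: "sg A i (\<lambda>x. c * \<phi> x) = asmult RA c (sg A i \<phi>)"
  by (simp add: sg_def asmult_R fun_eq_iff)
lemma sg_zero: "sg A i (\<lambda>x. 0) = azero RA"
  by (simp add: sg_def azero_R fun_eq_iff)

lemma trn_0: "r \<in> acar RA \<Longrightarrow> trn A 0 r = dg A 0 (fst r 0)"
  by (auto simp: trn_def dg_def mem_R fun_eq_iff prod_eq_iff)

lemma trn_Suc: "r \<in> acar RA \<Longrightarrow>
  trn A (Suc k) r = aadd RA (trn A k r) (aadd RA (dg A (Suc k) (fst r (Suc k))) (sg A (Suc k) (snd r (Suc k))))"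
  by (auto simp: trn_def dg_def sg_def mem_R fun_eq_iff prod_eq_iff aadd_R le_Suc_eq)

lemma trn_bnd: "r \<in> acar RA \<Longrightarrow> bnd A n r \<Longrightarrow> trn A n r = r"
  by (auto simp: trn_def bnd_def fun_eq_iff prod_eq_iff)

lemma fg_fdl:
  assumes M: "fg_rmod RA M"
  shows "\<exists>ws. kv.fdl (mcar M) (madd M) (mzero M) (msmult M) ws"
proof -
  interpret rm RA M by (rule fg_rm[OF M])
  obtain gs n where gs: "set gs \<subseteq> mcar M"
     "\<forall>m\<in>mcar M. \<exists>r. (\<forall>i<length gs. r i \<in> acar RA \<and> bnd A n (r i)) \<and>
        m = gsum (madd M) (mzero M) (\<lambda>i. mact M (gs ! i) (r i)) (length gs)"
    using fg_unit[OF M] by blast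
  obtain bs where bs: "set bs \<subseteq> acar A" "\<forall>x\<in>acar A. \<exists>cs. x = gsum (aadd A) (azero A) (\<lambda>t. asmult A (cs t) (bs ! t)) (length bs)"
    using fd_bs by blast
  obtain \<psi>s where \<psi>s: "set \<psi>s \<subseteq> dual A" "\<forall>\<phi>\<in>dual A. \<exists>lam.
    \<phi> = gsum (\<lambda>\<phi> \<psi> x. \<phi> x + \<psi> x) (\<lambda>x. 0) (\<lambda>u x. lam u * (\<psi>s ! u) x) (length \<psi>s)"
    using dual_span by blast
  define L where "L = length gs"
  have gi: "j < L \<Longrightarrow> gs ! j \<in> mcar M" for j using gs(1) nth_mem unfolding L_def by blast
  define W1 where "W1 = concat (map (\<lambda>j. concat (map (\<lambda>i. map (\<lambda>b. mact M (gs ! j) (dg A i b)) bs) [0..<Suc n])) [0..<L])"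
  define W2 where "W2 = concat (map (\<lambda>j. concat (map (\<lambda>i. map (\<lambda>\<psi>. mact M (gs ! j) (sg A i \<psi>)) \<psi>s) [1..<Suc n])) [0..<L])"
  define W where "W = W1 @ W2"
  have W1M: "set W1 \<subseteq> mcar M" unfolding W1_def using gi bs(1) by auto
  have W2M: "set W2 \<subseteq> mcar M" unfolding W2_def using gi \<psi>s(1) by auto
  have WM: "set W \<subseteq> mcar M" unfolding W_def using W1M W2M by auto
  define S where "S = range (lcomb W)"
  have S_add: "madd M x y \<in> S" if xS: "x \<in> S" and yS: "y \<in> S" for x y
  proof -
    obtain c where "x = lcomb W c" using xS unfolding S_def by blast
    moreover obtain d where "y = lcomb W d" using yS unfolding S_def by blast
    ultimately
    have "madd M x y = lcomb W (c + d)" using lcomb_add[OF WM] by simp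
    then show ?thesis unfolding S_def by simp
  qed
  have S_sc: "msmult M c x \<in> S" if xS: "x \<in> S" for c x
  proof -
    obtain d where "x = lcomb W d" using xS unfolding S_def by blast
    then have "msmult M c x = lcomb W (fsc c d)" using lcomb_sc[OF WM] by simp
    then show ?thesis unfolding S_def by simp
  qed
  have S_z: "mzero M \<in> S" unfolding S_def using lcomb_zero[OF WM] by (metis rangeI)
  have S_W: "x \<in> S" if xW: "x \<in> set W" for x
  proof -
    obtain t where "t < length W" "x = W ! t" using xW by (auto simp: in_set_conv_nth)
    then show ?thesis unfolding S_def using lcomb_unit[OF WM] by (metis rangeI)
  qed
  have S_gsum: "gsum (madd M) (mzero M) f m \<in> S" if "\<And>i. i < m \<Longrightarrow> f i \<in> S" for f m
    using that by (induction m) (auto intro: S_add S_z)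
  have dgS: "mact M (gs ! j) (dg A i a) \<in> S" if j: "j < L" and i: "i \<le> n" and a: "a \<in> acar A" for j i a
  proof -
    obtain cs where cs: "a = gsum (aadd A) (azero A) (\<lambda>t. asmult A (cs t) (bs ! t)) (length bs)"
      using bs(2) a by blast
    have bt: "t < length bs \<Longrightarrow> bs ! t \<in> acar A" for t using bs(1) nth_mem by blast
    have "m \<le> length bs \<Longrightarrow> mact M (gs ! j) (dg A i (gsum (aadd A) (azero A) (\<lambda>t. asmult A (cs t) (bs ! t)) m)) \<in> S" for m
    proof (induction m)
      case 0 then show ?case using act_zeroR[OF rm_axioms gi[OF j]] S_z by (simp add: dg_zero)
    next
      case (Suc m)
      let ?g = "gsum (aadd A) (azero A) (\<lambda>t. asmult A (cs t) (bs ! t)) m"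
      have gin: "?g \<in> acar A" using Suc.prems bt by (intro AK.gsum_in) auto
      have bm: "bs ! m \<in> acar A" using Suc.prems bt by simp
      have "mact M (gs ! j) (dg A i (bs ! m)) \<in> set W1"
        unfolding W1_def
        by (rule concat_memI[where a=j], rule concat_memI[where a=i]) (use j i Suc.prems in auto)
      then have "mact M (gs ! j) (dg A i (bs ! m)) \<in> set W" unfolding W_def by simp
      then have w: "mact M (gs ! j) (dg A i (bs ! m)) \<in> S" by (rule S_W)
      have "mact M (gs ! j) (dg A i (gsum (aadd A) (azero A) (\<lambda>t. asmult A (cs t) (bs ! t)) (Suc m)))
          = madd M (mact M (gs ! j) (dg A i ?g)) (msmult M (cs m) (mact M (gs ! j) (dg A i (bs ! m))))"
        using gin bm gi[OF j] by (simp add: dg_add dg_sc act_addr act_scr)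
      then show ?case using Suc w by (simp add: S_add S_sc)
    qed
    then show ?thesis using cs by simp
  qed
  have sgS: "mact M (gs ! j) (sg A i \<phi>) \<in> S" if j: "j < L" and i: "1 \<le> i" "i \<le> n" and \<phi>: "\<phi> \<in> dual A" for j i \<phi>
  proof -
    obtain lam where lam: "\<phi> = gsum (\<lambda>\<phi> \<psi> x. \<phi> x + \<psi> x) (\<lambda>x. 0) (\<lambda>u x. lam u * (\<psi>s ! u) x) (length \<psi>s)"
      using \<psi>s(2) \<phi> by blast
    have pt: "t < length \<psi>s \<Longrightarrow> \<psi>s ! t \<in> dual A" for t using \<psi>s(1) nth_mem by blast
    have "m \<le> length \<psi>s \<Longrightarrow> mact M (gs ! j) (sg A i (gsum (\<lambda>\<phi> \<psi> x. \<phi> x + \<psi> x) (\<lambda>x. 0) (\<lambda>u x. lam u * (\<psi>s ! u) x) m)) \<in> S" for m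
    proof (induction m)
      case 0 then show ?case using act_zeroR[OF rm_axioms gi[OF j]] S_z by (simp add: sg_zero)
    next
      case (Suc m)
      let ?g = "gsum (\<lambda>\<phi> \<psi> x. \<phi> x + \<psi> x) (\<lambda>x. 0) (\<lambda>u x. lam u * (\<psi>s ! u) x) m"
      have gin: "?g \<in> dual A" using Suc.prems pt by (intro DK.gsum_in sc_dual) auto
      have bm: "\<psi>s ! m \<in> dual A" using Suc.prems pt by simp
      have i0: "i \<noteq> 0" using i by simp
      have "mact M (gs ! j) (sg A i (\<psi>s ! m)) \<in> set W2"
        unfolding W2_def
        by (rule concat_memI[where a=j], rule concat_memI[where a=i]) (use j i Suc.prems in auto)
      then have "mact M (gs ! j) (sg A i (\<psi>s ! m)) \<in> set W" unfolding W_def by simp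
      then have w: "mact M (gs ! j) (sg A i (\<psi>s ! m)) \<in> S" by (rule S_W)
      have "mact M (gs ! j) (sg A i (gsum (\<lambda>\<phi> \<psi> x. \<phi> x + \<psi> x) (\<lambda>x. 0) (\<lambda>u x. lam u * (\<psi>s ! u) x) (Suc m)))
          = madd M (mact M (gs ! j) (sg A i ?g)) (msmult M (lam m) (mact M (gs ! j) (sg A i (\<psi>s ! m))))"
        using gin bm gi[OF j] i0 by (simp add: sg_add sg_sc act_addr act_scr sc_dual)
      then show ?case using Suc w by (simp add: S_add S_sc)
    qed
    then show ?thesis using lam by simp
  qed
  have trnS: "mact M (gs ! j) (trn A k r) \<in> S" if j: "j < L" and r: "r \<in> acar RA" and k: "k \<le> n" for j r k
    using k
  proof (induction k)
    case 0 then show ?case using dgS[OF j] r by (simp add: trn_0 mem_R)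
  next
    case (Suc k)
    have f: "fst r (Suc k) \<in> acar A" and s: "snd r (Suc k) \<in> dual A" using r by (auto simp: mem_R)
    have "mact M (gs ! j) (trn A (Suc k) r) = madd M (mact M (gs ! j) (trn A k r))
        (madd M (mact M (gs ! j) (dg A (Suc k) (fst r (Suc k)))) (mact M (gs ! j) (sg A (Suc k) (snd r (Suc k)))))"
      using r f s gi[OF j] by (simp add: trn_Suc act_addr)
    moreover have "mact M (gs ! j) (dg A (Suc k) (fst r (Suc k))) \<in> S" using dgS[OF j Suc.prems f] .
    moreover have "mact M (gs ! j) (sg A (Suc k) (snd r (Suc k))) \<in> S" using sgS[OF j _ Suc.prems s] by simp
    ultimately show ?case using Suc by (simp add: S_add)
  qed
  have "x \<in> S" if x: "x \<in> mcar M" for x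
  proof -
    obtain r where r: "\<forall>i<length gs. r i \<in> acar RA \<and> bnd A n (r i)"
        "x = gsum (madd M) (mzero M) (\<lambda>i. mact M (gs ! i) (r i)) (length gs)" using gs(2) x by blast
    show ?thesis unfolding r(2)
    proof (rule S_gsum)
      fix i assume i: "i < length gs"
      then have "mact M (gs ! i) (trn A n (r i)) \<in> S" using trnS[of i "r i" n] r(1) unfolding L_def by simp
      then show "mact M (gs ! i) (r i) \<in> S" using trn_bnd r(1) i by simp
    qed
  qed
  then have "fdl W" unfolding fdl_def S_def using WM by auto
  then show ?thesis by blast
qed

end


context falg
begin

lemma fg_inj:
  assumes M: "fg_rmod RA M"
  shows "\<exists>j :: 'm \<Rightarrow> nat \<Rightarrow> 'k. inj_on j (mcar (M :: ('k, ('k, 'a) rep, 'm) rmod))"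
proof -
  interpret rm RA M by (rule fg_rm[OF M])
  obtain ws where "fdl ws" using fg_fdl[OF M] by blast
  then show ?thesis by (rule fdl_inj)
qed

lemma sub_fg:
  assumes M: "fg_rmod RA M" and S: "submod RA M S"
  shows "fg_rmod RA (M\<lparr>mcar := S\<rparr>)"
proof -
  interpret rm RA M by (rule fg_rm[OF M])
  obtain ws where ws: "fdl ws" using fg_fdl[OF M] by blast
  obtain ss where ss: "set ss \<subseteq> S" "\<forall>x\<in>S. \<exists>c. x = lcomb ss c"
    using sub_fdl[OF ws submod_ksub[OF S]] by blast
  obtain n where unit: "\<forall>m\<in>mcar M. mact M m (eN A n) = m" using fg_unit[OF M] by blast
  have SM: "S \<subseteq> mcar M" using S unfolding submod_def by auto
  have si: "i < length ss \<Longrightarrow> ss ! i \<in> mcar M" for i using ss(1) SM nth_mem by blast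
  have "\<exists>rs. length rs = length ss \<and> set rs \<subseteq> acar RA \<and>
        x = vsum (madd M) (mzero M) (map (\<lambda>(g, r). mact M g r) (zip ss rs))" if x: "x \<in> S" for x
  proof -
    obtain c where c: "x = lcomb ss c" using ss(2) x by blast
    define rs where "rs = map (\<lambda>i. asmult RA (c i) (eN A n)) [0..<length ss]"
    have "set (map (\<lambda>(g, r). mact M g r) (zip ss rs)) \<subseteq> mcar M"
      using si by (auto simp: set_zip rs_def)
    then have "vsum (madd M) (mzero M) (map (\<lambda>(g, r). mact M g r) (zip ss rs)) =
        gsum (madd M) (mzero M) (\<lambda>i. map (\<lambda>(g, r). mact M g r) (zip ss rs) ! i) (length ss)"
      by (simp add: vsum_gsum rs_def)
    also have "\<dots> = gsum (madd M) (mzero M) (\<lambda>i. msmult M (c i) (ss ! i)) (length ss)"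
      using si unit by (intro gsum_cong) (simp add: rs_def act_scr)
    also have "\<dots> = x" using c unfolding lcomb_def by simp
    finally show ?thesis by (intro exI[of _ rs]) (auto simp: rs_def)
  qed
  then show ?thesis using ss(1) submod_rmod[OF rm S] unfolding fg_rmod_def by auto
qed

lemma proj_fg:
  fixes X :: "('k, ('k, 'a) rep, 'x) rmod" and Y :: "('k, ('k, 'a) rep, 'y) rmod"
  assumes P: "projective_in RA P" and X: "fg_rmod RA X" and Y: "fg_rmod RA Y"
    and p: "hom RA X Y p" "p ` mcar X = mcar Y" and h: "hom RA P Y h"
  shows "\<exists>h'. hom RA P X h' \<and> (\<forall>m\<in>mcar P. p (h' m) = h m)"
proof -
  obtain jX :: "'x \<Rightarrow> nat \<Rightarrow> 'k" where jX: "inj_on jX (mcar X)" using fg_inj[OF X] by blast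
  obtain jY :: "'y \<Rightarrow> nat \<Rightarrow> 'k" where jY: "inj_on jY (mcar Y)" using fg_inj[OF Y] by blast
  show ?thesis by (rule proj_gen[OF P X Y jX jY p h])
qed

lemma inj_fg:
  fixes X :: "('k, ('k, 'a) rep, 'x) rmod" and Y :: "('k, ('k, 'a) rep, 'y) rmod"
  assumes E: "injective_in RA E" and X: "fg_rmod RA X" and Y: "fg_rmod RA Y"
    and u: "hom RA X Y u" "inj_on u (mcar X)" and h: "hom RA X E h"
  shows "\<exists>h'. hom RA Y E h' \<and> (\<forall>x\<in>mcar X. h' (u x) = h x)"
proof -
  obtain jX :: "'x \<Rightarrow> nat \<Rightarrow> 'k" where jX: "inj_on jX (mcar X)" using fg_inj[OF X] by blast
  obtain jY :: "'y \<Rightarrow> nat \<Rightarrow> 'k" where jY: "inj_on jY (mcar Y)" using fg_inj[OF Y] by blast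
  show ?thesis by (rule inj_gen[OF E X Y jX jY u h])
qed

end


context kv
begin
lemma sub_sum_eq: "a \<in> V \<Longrightarrow> b \<in> V \<Longrightarrow> a' \<in> V \<Longrightarrow> b' \<in> V \<Longrightarrow> add a b = add a' b' \<Longrightarrow> sub a a' = sub b' b"
proof -
  assume v: "a \<in> V" "b \<in> V" "a' \<in> V" "b' \<in> V" and e: "add a b = add a' b'"
  have "sub a a' = add (sub a a') (add b (sc (-1) b))" using v linv[of b] by (simp add: sub_def)
  also have "\<dots> = add (add a b) (add (sc (-1) a') (sc (-1) b))" using v by (simp add: sub_def add4)
  also have "\<dots> = add (add a' b') (add (sc (-1) a') (sc (-1) b))" using e by simp
  also have "\<dots> = add (add a' (sc (-1) a')) (add b' (sc (-1) b))" using v by (simp add: add4)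
  also have "\<dots> = sub b' b" using v linv[of a'] by (simp add: sub_def)
  finally show ?thesis .
qed
end

lemma down_induct: "P (N::nat) \<Longrightarrow> (\<And>j. P (Suc j) \<Longrightarrow> P j) \<Longrightarrow> P 0"
  by (induction N) auto

context rm
begin

lemma sub_closed: "submod R M U \<Longrightarrow> x \<in> U \<Longrightarrow> y \<in> U \<Longrightarrow> sub x y \<in> U"
  unfolding submod_def sub_def by blast

lemma proj_exists:
  assumes N1: "submod R M N1" and N2: "submod R M N2" and int: "N1 \<inter> N2 = {mzero M}"
    and sum: "msum_set M N1 N2 = mcar M"
  shows "\<exists>p. hom R M M p \<and> (\<forall>y\<in>mcar M. p y \<in> N1 \<and> sub y (p y) \<in> N2) \<and> (\<forall>a\<in>N1. p a = a) \<and> (\<forall>b\<in>N2. p b = mzero M)"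
proof -
  have N1M: "N1 \<subseteq> mcar M" and N2M: "N2 \<subseteq> mcar M" using N1 N2 unfolding submod_def by auto
  have uniq: "a = a'" if "a \<in> N1" "a' \<in> N1" "b \<in> N2" "b' \<in> N2" "madd M a b = madd M a' b'" for a a' b b'
  proof -
    have "sub a a' = sub b' b" using that N1M N2M by (intro sub_sum_eq) auto
    moreover have "sub a a' \<in> N1" using that sub_closed[OF N1] by simp
    moreover have "sub b' b \<in> N2" using that sub_closed[OF N2] by simp
    ultimately have "sub a a' = mzero M" using int by auto
    then show ?thesis using sub_eq_z that N1M by auto
  qed
  define p where "p y = (SOME a. a \<in> N1 \<and> (\<exists>b\<in>N2. y = madd M a b))" for y
  have pex: "p y \<in> N1 \<and> (\<exists>b\<in>N2. y = madd M (p y) b)" if "y \<in> mcar M" for y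
  proof -
    have "\<exists>a. a \<in> N1 \<and> (\<exists>b\<in>N2. y = madd M a b)" using that sum unfolding msum_set_def by blast
    then show ?thesis unfolding p_def by (rule someI_ex)
  qed
  have pchar: "p y = a" if "a \<in> N1" "b \<in> N2" "y = madd M a b" for y a b
  proof -
    have "a \<in> mcar M" "b \<in> mcar M" using that N1M N2M by auto
    then have y: "y \<in> mcar M" using that by simp
    obtain b' where "b' \<in> N2" "y = madd M (p y) b'" using pex[OF y] by blast
    then show ?thesis using uniq[of "p y" a b' b] pex[OF y] that by auto
  qed
  have hom: "hom R M M p"
    unfolding hom_def
  proof (intro conjI ballI allI)
    show "p ` mcar M \<subseteq> mcar M" using pex N1M by auto
  next
    fix x y assume x: "x \<in> mcar M" and y: "y \<in> mcar M"
    obtain b where b: "b \<in> N2" "x = madd M (p x) b" using pex[OF x] by blast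
    obtain b' where b': "b' \<in> N2" "y = madd M (p y) b'" using pex[OF y] by blast
    have "madd M x y = madd M (madd M (p x) (p y)) (madd M b b')"
      using b b' pex x y N1M N2M by (simp add: add4 subset_iff)
    then show "p (madd M x y) = madd M (p x) (p y)"
      using pchar N1 N2 b b' pex x y unfolding submod_def by auto
  next
    fix c x assume x: "x \<in> mcar M"
    obtain b where b: "b \<in> N2" "x = madd M (p x) b" using pex[OF x] by blast
    have "msmult M c x = madd M (msmult M c (p x)) (msmult M c b)"
      using b pex x N1M N2M by (metis sc_addr subsetD)
    then show "p (msmult M c x) = msmult M c (p x)"
      using pchar N1 N2 b pex x unfolding submod_def by auto
  next
    fix x r assume x: "x \<in> mcar M" and r: "r \<in> acar R"
    obtain b where b: "b \<in> N2" "x = madd M (p x) b" using pex[OF x] by blast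
    have "mact M x r = madd M (mact M (p x) r) (mact M b r)"
      using b pex x N1M N2M r by (metis act_addl subsetD)
    then show "p (mact M x r) = mact M (p x) r"
      using pchar N1 N2 b pex x r unfolding submod_def by auto
  qed
  have p1: "\<forall>a\<in>N1. p a = a" using pchar N2 N1M unfolding submod_def by (metis rz subsetD)
  have p2: "\<forall>b\<in>N2. p b = mzero M" using pchar N1 N2M unfolding submod_def by (metis lz subsetD)
  have p3: "sub y (p y) \<in> N2" if y: "y \<in> mcar M" for y
  proof -
    obtain b where b: "b \<in> N2" "y = madd M (p y) b" using pex[OF y] by blast
    have "sub y (p y) = b" using b pex[OF y] N1M N2M add_sub comm by (metis subsetD)
    then show ?thesis using b by simp
  qed
  show ?thesis using hom pex p1 p2 p3 by blast
qed

end

context rm2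
begin

lemma pull_hom:
  assumes f: "hom R M N f" and inj: "inj_on f (mcar M)" and h: "hom R N N h"
    and inv: "\<And>x. x \<in> mcar M \<Longrightarrow> h (f x) \<in> f ` mcar M"
  defines "\<psi> \<equiv> \<lambda>x. the_inv_into (mcar M) f (h (f x))"
  shows "hom R M M \<psi>" and "\<And>x. x \<in> mcar M \<Longrightarrow> \<psi> x \<in> mcar M \<and> f (\<psi> x) = h (f x)"
    and "\<And>x k. x \<in> mcar M \<Longrightarrow> f ((\<psi> ^^ k) x) = (h ^^ k) (f x)"
proof -
  interpret NN: rm2 R N N by unfold_locales
  show ps: "\<And>x. x \<in> mcar M \<Longrightarrow> \<psi> x \<in> mcar M \<and> f (\<psi> x) = h (f x)"
  proof -
    fix x assume x: "x \<in> mcar M"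
    obtain a where a: "a \<in> mcar M" "h (f x) = f a" using inv[OF x] by auto
    then show "\<psi> x \<in> mcar M \<and> f (\<psi> x) = h (f x)" unfolding \<psi>_def using the_inv_into_f_f[OF inj a(1)] by simp
  qed
  have finj: "x \<in> mcar M \<Longrightarrow> y \<in> mcar M \<Longrightarrow> f x = f y \<Longrightarrow> x = y" for x y using inj by (meson inj_onD)
  show "hom R M M \<psi>"
    unfolding hom_def
  proof (intro conjI ballI allI)
    show "\<psi> ` mcar M \<subseteq> mcar M" using ps by auto
  next
    fix x y assume x: "x \<in> mcar M" and y: "y \<in> mcar M"
    have "f (\<psi> (madd M x y)) = f (madd M (\<psi> x) (\<psi> y))"
      using ps x y by (simp add: hom_add[OF f] NN.hom_add[OF h] hom_in[OF f])
    then show "\<psi> (madd M x y) = madd M (\<psi> x) (\<psi> y)" using finj ps x y by simp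
  next
    fix c x assume x: "x \<in> mcar M"
    have "f (\<psi> (msmult M c x)) = f (msmult M c (\<psi> x))"
      using ps x by (simp add: hom_sc[OF f] NN.hom_sc[OF h] hom_in[OF f])
    then show "\<psi> (msmult M c x) = msmult M c (\<psi> x)" using finj ps x by simp
  next
    fix x r assume x: "x \<in> mcar M" and r: "r \<in> acar R"
    have "f (\<psi> (mact M x r)) = f (mact M (\<psi> x) r)"
      using ps x r by (simp add: hom_act[OF f] NN.hom_act[OF h] hom_in[OF f])
    then show "\<psi> (mact M x r) = mact M (\<psi> x) r" using finj ps x r by simp
  qed
  show "\<And>x k. x \<in> mcar M \<Longrightarrow> f ((\<psi> ^^ k) x) = (h ^^ k) (f x)"
  proof -
    fix x k assume x: "x \<in> mcar M"
    show "f ((\<psi> ^^ k) x) = (h ^^ k) (f x)"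
    proof (induction k)
      case 0 then show ?case by simp
    next
      case (Suc k)
      have "(\<psi> ^^ k) x \<in> mcar M" using x hom_funpow_in[OF \<open>hom R M M \<psi>\<close>] by simp
      then show ?case using ps Suc by simp
    qed
  qed
qed

end


locale sit = falg A for A :: "('k::field, 'a) ualg" +
  fixes L :: "('k, ('k, 'a) rep, 'l) rmod" and I :: "('k, ('k, 'a) rep, 'i) rmod"
    and N :: "('k, ('k, 'a) rep, 'n) rmod" and f :: "'l \<Rightarrow> 'i" and g :: "'i \<Rightarrow> 'n"
  assumes Lfg: "fg_rmod (rep_alg A) L" and Ifg: "fg_rmod (rep_alg A) I" and Nfg: "fg_rmod (rep_alg A) N"
    and indL: "indecomposable (rep_alg A) L"
    and fh: "hom (rep_alg A) L I f" and gh: "hom (rep_alg A) I N g"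
    and finj: "inj_on f (mcar L)" and gsurj: "g ` mcar I = mcar N"
    and ker: "f ` mcar L = {x \<in> mcar I. g x = mzero N}"
    and ess: "essential_submod (rep_alg A) I (f ` mcar L)"
    and projI: "projective_in (rep_alg A) I" and injI: "injective_in (rep_alg A) I"
    and N0: "mcar N \<noteq> {mzero N}"
begin

sublocale LI: rm2 RA L I using Lfg Ifg by (simp add: rm2_def fg_rm)
sublocale IN: rm2 RA I N using Nfg Ifg by (simp add: rm2_def fg_rm)
sublocale II: rm2 RA I I using Ifg by (simp add: rm2_def fg_rm)
sublocale LL: rm2 RA L L using Lfg by (simp add: rm2_def fg_rm)
sublocale NN: rm2 RA N N using Nfg by (simp add: rm2_def fg_rm)

abbreviation "K \<equiv> f ` mcar L"

lemma K_sub: "submod RA I K" using ess unfolding essential_submod_def by auto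

lemma ess_zero: "submod RA I V \<Longrightarrow> V \<inter> K \<subseteq> {mzero I} \<Longrightarrow> V = {mzero I}"
proof -
  assume V: "submod RA I V" and i: "V \<inter> K \<subseteq> {mzero I}"
  have "mzero I \<in> V" "mzero I \<in> K" using V K_sub unfolding submod_def by auto
  then have "K \<inter> V = {mzero I}" using i by auto
  then show ?thesis using ess V unfolding essential_submod_def by blast
qed

lemma finj': "x \<in> mcar L \<Longrightarrow> y \<in> mcar L \<Longrightarrow> f x = f y \<Longrightarrow> x = y"
  using finj by (meson inj_onD)

lemma f_zero_iff: "x \<in> mcar L \<Longrightarrow> f x = mzero I \<longleftrightarrow> x = mzero L"
  using finj'[of x "mzero L"] LI.hom_z[OF fh] by auto

lemma L_nonzero: "\<exists>x\<in>mcar L. x \<noteq> mzero L"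
  using indL LI.M.z_in unfolding indecomposable_def by blast

lemma fdlL: "\<exists>ws. LI.M.fdl ws" using fg_fdl[OF Lfg] by blast

lemma surj_case:
  assumes h: "hom RA I I h" and hK: "\<And>x. x \<in> mcar L \<Longrightarrow> h (f x) \<in> K"
    and inj: "\<And>x. x \<in> mcar L \<Longrightarrow> ((\<lambda>x. the_inv_into (mcar L) f (h (f x))) ^^ n) x = mzero L \<Longrightarrow> x = mzero L"
    and onto: "((\<lambda>x. the_inv_into (mcar L) f (h (f x))) ^^ n) ` mcar L = mcar L"
  shows "(h ^^ n) ` mcar I = mcar I"
proof -
  define \<psi> where "\<psi> = (\<lambda>x. the_inv_into (mcar L) f (h (f x)))"
  have psi: "hom RA L L \<psi>" "\<And>x k. x \<in> mcar L \<Longrightarrow> f ((\<psi> ^^ k) x) = (h ^^ k) (f x)"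
    using LI.pull_hom[OF fh finj h hK] unfolding \<psi>_def by auto
  define hn where "hn = h ^^ n"
  have hn: "hom RA I I hn" unfolding hn_def by (rule hom_funpow[OF h])
  have hnf: "hn (f x) = f ((\<psi> ^^ n) x)" if "x \<in> mcar L" for x using psi(2)[OF that] unfolding hn_def by simp
  have "{y \<in> mcar I. hn y = mzero I} = {mzero I}"
  proof (rule ess_zero[OF II.ker_submod[OF hn]])
    show "{y \<in> mcar I. hn y = mzero I} \<inter> K \<subseteq> {mzero I}"
    proof
      fix y assume "y \<in> {y \<in> mcar I. hn y = mzero I} \<inter> K"
      then obtain x where x: "x \<in> mcar L" "y = f x" "hn (f x) = mzero I" by auto
      have "(\<psi> ^^ n) x \<in> mcar L" using hom_funpow_in[OF psi(1) x(1)] .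
      then have "(\<psi> ^^ n) x = mzero L" using x hnf f_zero_iff by simp
      then have "x = mzero L" using inj[OF x(1)] unfolding \<psi>_def by simp
      then show "y \<in> {mzero I}" using x LI.hom_z[OF fh] by simp
    qed
  qed
  then have hninj: "inj_on hn (mcar I)" using II.hom_inj_iff[OF hn] by auto
  obtain \<rho> where \<rho>: "hom RA I I \<rho>" "\<forall>x\<in>mcar I. \<rho> (hn x) = x"
    using inj_fg[OF injI Ifg Ifg hn hninj hom_id] by blast
  have "{y \<in> mcar I. \<rho> y = mzero I} = {mzero I}"
  proof (rule ess_zero[OF II.ker_submod[OF \<rho>(1)]])
    show "{y \<in> mcar I. \<rho> y = mzero I} \<inter> K \<subseteq> {mzero I}"
    proof
      fix y assume "y \<in> {y \<in> mcar I. \<rho> y = mzero I} \<inter> K"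
      then obtain x where x: "x \<in> mcar L" "y = f x" "\<rho> y = mzero I" by auto
      obtain z where z: "z \<in> mcar L" "x = (\<psi> ^^ n) z" using onto x(1) unfolding \<psi>_def by blast
      have yz: "y = hn (f z)" using x z hnf by simp
      then have "\<rho> y = f z" using \<rho>(2) LI.hom_in[OF fh z(1)] by simp
      then have "f z = mzero I" using x(3) by simp
      then have "z = mzero L" using f_zero_iff[OF z(1)] by simp
      then show "y \<in> {mzero I}" using yz LI.hom_z[OF fh] II.hom_z[OF hn] by simp
    qed
  qed
  then have \<rho>0: "y \<in> mcar I \<Longrightarrow> \<rho> y = mzero I \<Longrightarrow> y = mzero I" for y by blast
  have "y \<in> hn ` mcar I" if y: "y \<in> mcar I" for y
  proof -
    have ry: "\<rho> y \<in> mcar I" using II.hom_in[OF \<rho>(1) y] .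
    have hry: "hn (\<rho> y) \<in> mcar I" using II.hom_in[OF hn ry] .
    have "\<rho> (LI.N.sub y (hn (\<rho> y))) = LI.N.sub (\<rho> y) (\<rho> (hn (\<rho> y)))" using II.hom_sub[OF \<rho>(1) y hry] .
    also have "\<dots> = mzero I" using \<rho>(2) ry by simp
    finally have "LI.N.sub y (hn (\<rho> y)) = mzero I" using \<rho>0 y hry by simp
    then have "y = hn (\<rho> y)" using LI.N.sub_eq_z y hry by blast
    then show ?thesis using ry by blast
  qed
  moreover have "hn ` mcar I \<subseteq> mcar I" using II.hom_in[OF hn] by auto
  ultimately show ?thesis unfolding hn_def by blast
qed

lemma fitting_pull:
  assumes h: "hom RA I I h" and hK: "\<And>x. x \<in> mcar L \<Longrightarrow> h (f x) \<in> K"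
  shows "\<exists>n\<ge>1. (\<forall>x\<in>mcar L. ((\<lambda>x. the_inv_into (mcar L) f (h (f x))) ^^ n) x = mzero L) \<or>
     (h ^^ n) ` mcar I = mcar I"
proof -
  define \<psi> where "\<psi> = (\<lambda>x. the_inv_into (mcar L) f (h (f x)))"
  have psi: "hom RA L L \<psi>" using LI.pull_hom[OF fh finj h hK] unfolding \<psi>_def by auto
  obtain ws where ws: "LI.M.fdl ws" using fdlL by blast
  obtain n where n: "n \<ge> 1" "(\<forall>x\<in>mcar L. (\<psi> ^^ n) x = mzero L) \<or>
     ((\<forall>x\<in>mcar L. (\<psi> ^^ n) x = mzero L \<longrightarrow> x = mzero L) \<and> (\<psi> ^^ n) ` mcar L = mcar L)"
    using LI.M.fitting[OF ws indL psi] by blast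
  show ?thesis
  proof (cases "\<forall>x\<in>mcar L. (\<psi> ^^ n) x = mzero L")
    case True then show ?thesis using n(1) unfolding \<psi>_def by blast
  next
    case False
    then have "(\<forall>x\<in>mcar L. (\<psi> ^^ n) x = mzero L \<longrightarrow> x = mzero L) \<and> (\<psi> ^^ n) ` mcar L = mcar L" using n by blast
    then have "(h ^^ n) ` mcar I = mcar I" using surj_case[OF h hK] unfolding \<psi>_def by blast
    then show ?thesis using n(1) by blast
  qed
qed

end


context sit
begin

lemma K_eq: "K = {x \<in> mcar I. g x = mzero N}" by (rule ker)

lemma part1: "superfluous_submod RA I {x \<in> mcar I. g x = mzero N}"
  unfolding superfluous_submod_def
proof (intro conjI allI impI)
  show "submod RA I {x \<in> mcar I. g x = mzero N}" by (rule IN.ker_submod[OF gh])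
  fix U assume a: "submod RA I U \<and> msum_set I {x \<in> mcar I. g x = mzero N} U = mcar I"
  then have U: "submod RA I U" and sumU: "msum_set I K U = mcar I" using K_eq by auto
  have UI: "U \<subseteq> mcar I" using U unfolding submod_def by auto
  have Ufg: "fg_rmod RA (I\<lparr>mcar := U\<rparr>)" by (rule sub_fg[OF Ifg U])
  have gU: "hom RA (I\<lparr>mcar := U\<rparr>) N g" by (rule hom_from_sub[OF gh UI])
  have gUs: "g ` mcar (I\<lparr>mcar := U\<rparr>) = mcar N"
  proof
    show "g ` mcar (I\<lparr>mcar := U\<rparr>) \<subseteq> mcar N" using UI IN.hom_in[OF gh] by auto
    show "mcar N \<subseteq> g ` mcar (I\<lparr>mcar := U\<rparr>)"
    proof
      fix n assume "n \<in> mcar N"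
      then obtain y where y: "y \<in> mcar I" "n = g y" using gsurj by auto
      then obtain k u where ku: "k \<in> K" "u \<in> U" "y = madd I k u" using sumU unfolding msum_set_def by blast
      have kI: "k \<in> mcar I" using ku(1) K_eq by auto
      have "g k = mzero N" using ku(1) K_eq by auto
      have uI: "u \<in> mcar I" using ku(2) UI by auto
      have "g y = madd N (g k) (g u)" using ku(3) IN.hom_add[OF gh kI uI] by simp
      also have "\<dots> = g u" using \<open>g k = mzero N\<close> IN.hom_in[OF gh uI] by simp
      finally have "n = g u" using y by simp
      then show "n \<in> g ` mcar (I\<lparr>mcar := U\<rparr>)" using ku by simp
    qed
  qed
  obtain h' where h': "hom RA I (I\<lparr>mcar := U\<rparr>) h'" "\<forall>m\<in>mcar I. g (h' m) = g m"
    using proj_fg[OF projI Ufg Nfg gU gUs gh] by blast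
  have h'I: "hom RA I I h'" by (rule hom_sub_target[OF h'(1) UI])
  have h'U: "y \<in> mcar I \<Longrightarrow> h' y \<in> U" for y using h'(1) unfolding hom_def by auto
  define \<phi> where "\<phi> = (\<lambda>x. LI.N.sub x (h' x))"
  have \<phi>: "hom RA I I \<phi>" unfolding \<phi>_def by (rule II.hom_sub_fun[OF hom_id h'I])
  have \<phi>K: "\<phi> y \<in> K" if y: "y \<in> mcar I" for y
  proof -
    have hy: "h' y \<in> mcar I" using h'U y UI by auto
    have "g (\<phi> y) = IN.N.sub (g y) (g (h' y))" unfolding \<phi>_def using IN.hom_sub[OF gh y hy] .
    also have "\<dots> = mzero N" using h'(2) y IN.hom_in[OF gh y] by simp
    finally show ?thesis using K_eq II.hom_in[OF \<phi> y] by simp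
  qed
  have \<phi>K': "\<And>x. x \<in> mcar L \<Longrightarrow> \<phi> (f x) \<in> K" using \<phi>K LI.hom_in[OF fh] by simp
  define \<psi> where "\<psi> = (\<lambda>x. the_inv_into (mcar L) f (\<phi> (f x)))"
  have psi: "\<And>x k. x \<in> mcar L \<Longrightarrow> f ((\<psi> ^^ k) x) = (\<phi> ^^ k) (f x)"
    using LI.pull_hom[OF fh finj \<phi> \<phi>K'] unfolding \<psi>_def by auto
  obtain n where n: "n \<ge> 1" "(\<forall>x\<in>mcar L. (\<psi> ^^ n) x = mzero L) \<or> (\<phi> ^^ n) ` mcar I = mcar I"
    using fitting_pull[OF \<phi> \<phi>K'] unfolding \<psi>_def by blast
  show "U = mcar I"
  proof (cases "(\<phi> ^^ n) ` mcar I = mcar I")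
    case True
    obtain m where m: "n = Suc m" using n(1) by (cases n) auto
    have "mcar I \<subseteq> K"
    proof
      fix y assume y: "y \<in> mcar I"
      then obtain z where z: "z \<in> mcar I" "y = (\<phi> ^^ n) z" using True by auto
      have "y = \<phi> ((\<phi> ^^ m) z)" using z m by simp
      then show "y \<in> K" using \<phi>K hom_funpow_in[OF \<phi> z(1)] by simp
    qed
    have "mcar N \<subseteq> {mzero N}"
    proof
      fix z assume "z \<in> mcar N"
      then obtain y where "y \<in> mcar I" "z = g y" using gsurj by auto
      then show "z \<in> {mzero N}" using \<open>mcar I \<subseteq> K\<close> K_eq by auto
    qed
    then have False using N0 IN.N.z_in by auto
    then show ?thesis ..
  next
    case False
    then have nil: "\<forall>x\<in>mcar L. (\<psi> ^^ n) x = mzero L" using n by blast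
    have "y \<in> U" if y: "y \<in> mcar I" for y
    proof -
      obtain x where x: "x \<in> mcar L" "\<phi> y = f x" using \<phi>K[OF y] by auto
      have "(\<phi> ^^ Suc n) y = (\<phi> ^^ n) (\<phi> y)" by (simp add: funpow_Suc_right del: funpow.simps)
      also have "\<dots> = f ((\<psi> ^^ n) x)" using psi[OF x(1)] x(2) by simp
      also have "\<dots> = mzero I" using nil x(1) LI.hom_z[OF fh] by simp
      finally have top: "(\<phi> ^^ Suc n) y \<in> U" using U unfolding submod_def by simp
      have step: "(\<phi> ^^ j) y \<in> U" if "(\<phi> ^^ Suc j) y \<in> U" for j
      proof -
        let ?z = "(\<phi> ^^ j) y"
        have zI: "?z \<in> mcar I" using hom_funpow_in[OF \<phi> y] .
        have hz: "h' ?z \<in> U" using h'U[OF zI] .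
        have hzI: "h' ?z \<in> mcar I" using hz UI by auto
        have "\<phi> ?z = LI.N.sub ?z (h' ?z)" unfolding \<phi>_def by simp
        then have "madd I (\<phi> ?z) (h' ?z) = ?z" using LI.N.sub_add[OF zI hzI] by simp
        then have "?z = madd I (\<phi> ?z) (h' ?z)" by simp
        moreover have "\<phi> ?z \<in> U" using that by simp
        ultimately show ?thesis using hz U unfolding submod_def by metis
      qed
      have "(\<phi> ^^ 0) y \<in> U" by (rule down_induct[where P="\<lambda>j. (\<phi> ^^ j) y \<in> U", OF top step])
      then show ?thesis by simp
    qed
    then show ?thesis using UI by auto
  qed
qed

end


context sit
begin

lemma hK_lemma:
  assumes h: "hom RA I I h" and hp: "\<forall>y\<in>mcar I. g (h y) = p (g y)" and p: "hom RA N N p"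
  shows "\<And>x. x \<in> mcar L \<Longrightarrow> h (f x) \<in> K"
proof -
  fix x assume x: "x \<in> mcar L"
  have fx: "f x \<in> mcar I" using LI.hom_in[OF fh x] .
  have "g (f x) = mzero N" using K_eq x by auto
  then have "g (h (f x)) = mzero N" using hp fx NN.hom_z[OF p] by simp
  then show "h (f x) \<in> K" using K_eq II.hom_in[OF h fx] by simp
qed

lemma key2:
  assumes h: "hom RA I I h" and hp: "\<forall>y\<in>mcar I. g (h y) = p (g y)" and p: "hom RA N N p"
    and pNj: "\<forall>y\<in>mcar N. p y \<in> Nj" and pid: "\<forall>a\<in>Nj. p a = a"
  shows "(\<exists>n. \<forall>x\<in>mcar L. ((\<lambda>x. the_inv_into (mcar L) f (h (f x))) ^^ n) x = mzero L) \<or> mcar N \<subseteq> Nj"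
proof -
  note hK = hK_lemma[OF h hp p]
  obtain n where n: "n \<ge> 1" "(\<forall>x\<in>mcar L. ((\<lambda>x. the_inv_into (mcar L) f (h (f x))) ^^ n) x = mzero L) \<or>
     (h ^^ n) ` mcar I = mcar I"
    using fitting_pull[OF h hK] by blast
  have ghk: "g ((h ^^ Suc k) y) = p (g y)" if y: "y \<in> mcar I" for k y
  proof (induction k)
    case 0 then show ?case using hp y by simp
  next
    case (Suc k)
    have "(h ^^ Suc k) y \<in> mcar I" using hom_funpow_in[OF h y] .
    then have "g ((h ^^ Suc (Suc k)) y) = p (g ((h ^^ Suc k) y))" using hp by simp
    also have "\<dots> = p (p (g y))" using Suc by simp
    also have "\<dots> = p (g y)" using pid pNj IN.hom_in[OF gh y] by simp
    finally show ?case .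
  qed
  show ?thesis
  proof (cases "(h ^^ n) ` mcar I = mcar I")
    case True
    obtain m where m: "n = Suc m" using n(1) by (cases n) auto
    have "mcar N \<subseteq> Nj"
    proof
      fix z assume "z \<in> mcar N"
      then obtain y where y: "y \<in> mcar I" "z = g y" using gsurj by auto
      then obtain w where w: "w \<in> mcar I" "y = (h ^^ n) w" using True by auto
      have "z = p (g w)" using y w ghk[OF w(1), of m] m by simp
      then show "z \<in> Nj" using pNj IN.hom_in[OF gh w(1)] by simp
    qed
    then show ?thesis by blast
  next
    case False then show ?thesis using n by blast
  qed
qed

lemma part2: "indecomposable RA N"
  unfolding indecomposable_def
proof (intro conjI allI impI)
  show "mcar N \<noteq> {mzero N}" by (rule N0)
  fix N1 N2 assume a: "submod RA N N1 \<and> submod RA N N2 \<and> N1 \<inter> N2 = {mzero N} \<and> msum_set N N1 N2 = mcar N"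
  then have N1: "submod RA N N1" and N2: "submod RA N N2" and int: "N1 \<inter> N2 = {mzero N}"
    and sum: "msum_set N N1 N2 = mcar N" by auto
  have N1N: "N1 \<subseteq> mcar N" and N2N: "N2 \<subseteq> mcar N" and z1: "mzero N \<in> N1" and z2: "mzero N \<in> N2"
    using N1 N2 unfolding submod_def by auto
  show "N1 = {mzero N} \<or> N2 = {mzero N}"
  proof (rule ccontr)
    assume nz: "\<not> (N1 = {mzero N} \<or> N2 = {mzero N})"
    obtain p1 where p1: "hom RA N N p1" "\<forall>y\<in>mcar N. p1 y \<in> N1 \<and> IN.N.sub y (p1 y) \<in> N2"
        "\<forall>a\<in>N1. p1 a = a" "\<forall>b\<in>N2. p1 b = mzero N"
      using IN.N.proj_exists[OF N1 N2 int sum] by blast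
    obtain h1 where h1: "hom RA I I h1" "\<forall>m\<in>mcar I. g (h1 m) = p1 (g m)"
      using proj_fg[OF projI Ifg Nfg gh gsurj hom_comp[OF gh p1(1)]] by blast
    define h2 where "h2 = (\<lambda>y. LI.N.sub y (h1 y))"
    define p2 where "p2 = (\<lambda>z. IN.N.sub z (p1 z))"
    have h2: "hom RA I I h2" unfolding h2_def by (rule II.hom_sub_fun[OF hom_id h1(1)])
    have p2: "hom RA N N p2" unfolding p2_def by (rule NN.hom_sub_fun[OF hom_id p1(1)])
    have h2p: "\<forall>y\<in>mcar I. g (h2 y) = p2 (g y)"
    proof
      fix y assume y: "y \<in> mcar I"
      have "g (h2 y) = IN.N.sub (g y) (g (h1 y))" unfolding h2_def
        using IN.hom_sub[OF gh y II.hom_in[OF h1(1) y]] .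
      then show "g (h2 y) = p2 (g y)" unfolding p2_def using h1(2) y by simp
    qed
    have p2N2: "\<forall>y\<in>mcar N. p2 y \<in> N2" using p1(2) unfolding p2_def by blast
    have p2id: "\<forall>a\<in>N2. p2 a = a" unfolding p2_def using p1(4) N2N by auto
    define \<psi>1 where "\<psi>1 = (\<lambda>x. the_inv_into (mcar L) f (h1 (f x)))"
    define \<psi>2 where "\<psi>2 = (\<lambda>x. the_inv_into (mcar L) f (h2 (f x)))"
    have k1: "(\<exists>n. \<forall>x\<in>mcar L. (\<psi>1 ^^ n) x = mzero L) \<or> mcar N \<subseteq> N1"
      unfolding \<psi>1_def by (rule key2[OF h1(1) h1(2) p1(1)]) (use p1 in blast)+
    have k2: "(\<exists>n. \<forall>x\<in>mcar L. (\<psi>2 ^^ n) x = mzero L) \<or> mcar N \<subseteq> N2"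
      unfolding \<psi>2_def by (rule key2[OF h2 h2p p2 p2N2 p2id])
    have "\<not> mcar N \<subseteq> N1"
    proof
      assume "mcar N \<subseteq> N1"
      then have "N2 \<subseteq> {mzero N}" using N2N int by auto
      then show False using nz z2 by auto
    qed
    then obtain n1 where n1: "\<forall>x\<in>mcar L. (\<psi>1 ^^ n1) x = mzero L" using k1 by blast
    have "\<not> mcar N \<subseteq> N2"
    proof
      assume "mcar N \<subseteq> N2"
      then have "N1 \<subseteq> {mzero N}" using N1N int by auto
      then show False using nz z1 by auto
    qed
    then obtain n2 where n2: "\<forall>x\<in>mcar L. (\<psi>2 ^^ n2) x = mzero L" using k2 by blast
    have ps1: "\<And>x. x \<in> mcar L \<Longrightarrow> \<psi>1 x \<in> mcar L \<and> f (\<psi>1 x) = h1 (f x)" and hps1: "hom RA L L \<psi>1"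
      using LI.pull_hom[OF fh finj h1(1) hK_lemma[OF h1(1) h1(2) p1(1)]] unfolding \<psi>1_def by auto
    have ps2: "\<And>x. x \<in> mcar L \<Longrightarrow> \<psi>2 x \<in> mcar L \<and> f (\<psi>2 x) = h2 (f x)" and hps2: "hom RA L L \<psi>2"
      using LI.pull_hom[OF fh finj h2 hK_lemma[OF h2 h2p p2]] unfolding \<psi>2_def by auto
    have rel: "\<psi>2 x = LI.M.sub x (\<psi>1 x)" if x: "x \<in> mcar L" for x
    proof -
      have "f (\<psi>2 x) = LI.N.sub (f x) (h1 (f x))" using ps2[OF x] unfolding h2_def by simp
      also have "\<dots> = LI.N.sub (f x) (f (\<psi>1 x))" using ps1[OF x] by simp
      also have "\<dots> = f (LI.M.sub x (\<psi>1 x))" using LI.hom_sub[OF fh x] ps1[OF x] by simp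
      finally show ?thesis using finj' ps2[OF x] ps1[OF x] x by simp
    qed
    have inj2: "x = mzero L" if x: "x \<in> mcar L" and e: "\<psi>2 x = mzero L" for x
    proof -
      have "LI.M.sub x (\<psi>1 x) = mzero L" using rel[OF x] e by simp
      then have fix1: "\<psi>1 x = x" using LI.M.sub_eq_z x ps1[OF x] by metis
      have "(\<psi>1 ^^ k) x = x" for k by (induction k) (simp_all add: fix1)
      then show ?thesis using n1 x by metis
    qed
    have injk: "x = mzero L" if x: "x \<in> mcar L" and e: "(\<psi>2 ^^ k) x = mzero L" for x k
      using e
    proof (induction k)
      case 0 then show ?case by simp
    next
      case (Suc k)
      have "(\<psi>2 ^^ k) x \<in> mcar L" using hom_funpow_in[OF hps2 x] .
      then have "(\<psi>2 ^^ k) x = mzero L" using inj2 Suc.prems by simp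
      then show ?case using Suc.IH by simp
    qed
    have "\<forall>x\<in>mcar L. x = mzero L" using injk n2 by blast
    then show False using L_nonzero by blast
  qed
qed

end

theorem main_result:
  fixes A :: "('k::field, 'a) ualg"
    and L :: "('k, ('k, 'a) rep, 'l) rmod"
    and I :: "('k, ('k, 'a) rep, 'i) rmod"
    and N :: "('k, ('k, 'a) rep, 'n) rmod"
    and f :: "'l \<Rightarrow> 'i" and g :: "'i \<Rightarrow> 'n"
  assumes "alg_closed_field TYPE('k)"
    and "fd_alg A" and "basic_alg A" and "connected_alg A" and "hereditary_alg A"
    and "fg_rmod (rep_alg A) L" and "fg_rmod (rep_alg A) I" and "fg_rmod (rep_alg A) N"
    and "indecomposable (rep_alg A) L"
    and "hom (rep_alg A) L I f" and "hom (rep_alg A) I N g"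
    and "inj_on f (mcar L)" and "g ` mcar I = mcar N"
    and "f ` mcar L = {x \<in> mcar I. g x = mzero N}"
    and "injective_envelope (rep_alg A) L I f"
    and "projective_in (rep_alg A) I" and "injective_in (rep_alg A) I"
    and "mcar N \<noteq> {mzero N}"
  shows "projective_cover (rep_alg A) I N g \<and> indecomposable (rep_alg A) N"
proof -
  interpret sit A L I N f g
    using assms unfolding injective_envelope_def by unfold_locales auto
  show ?thesis using part1 part2 assms unfolding projective_cover_def by auto
qed


theorem lemma2p2:
  fixes A :: "('k::field, 'a) ualg"
    and L :: "('k, ('k, 'a) rep, 'l) rmod"
    and I :: "('k, ('k, 'a) rep, 'i) rmod"
    and N :: "('k, ('k, 'a) rep, 'n) rmod"
    and f :: "'l \<Rightarrow> 'i" and g :: "'i \<Rightarrow> 'n"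
  assumes "alg_closed_field TYPE('k)"
    and "fd_alg A" and "basic_alg A" and "connected_alg A" and "hereditary_alg A"
    and "fg_rmod (rep_alg A) L" and "fg_rmod (rep_alg A) I" and "fg_rmod (rep_alg A) N"
    and "indecomposable (rep_alg A) L"
    and "hom (rep_alg A) L I f" and "hom (rep_alg A) I N g"
    and "inj_on f (mcar L)" and "g ` mcar I = mcar N"
    and "f ` mcar L = {x \<in> mcar I. g x = mzero N}"
    and "injective_envelope (rep_alg A) L I f"
    and "projective_in (rep_alg A) I" and "injective_in (rep_alg A) I"
    and "mcar N \<noteq> {mzero N}"
  shows "projective_cover (rep_alg A) I N g \<and> indecomposable (rep_alg A) N"
    using assms by (rule main_result)

end
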